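(* Let $V\subseteq\mathcal V$ be finite, $\mathbb E\in\mathit{NProg}(V)$, $W\subseteq\mathcal V$ finite and $P,Q$ projectors on $\mathcal H_W$. Then $wp^a.\mathbb E.Q=\bigwedge_{\mathcal E\in\mathbb E}E(\mathcal E^\dagger(Q))$, $wlp^a.\mathbb E.Q=\bigwedge_{\mathcal E\in\mathbb E}\mathcal N(\mathcal E^\dagger(Q^\perp))$, and $sp^a.\mathbb E.P=\bigvee_{\mathcal E\in\mathbb E}\lceil\mathcal E(P)\rceil$.
   Context: $\mathcal V$ is a countably infinite set of qubit variables; $\mathcal H_V=\bigotimes_{q\in V}\mathcal H_q$. $\mathcal D(\mathcal H)$: partial density operators; projectors are identified with their image subspaces, ordered by inclusion $\sqsubseteq$; $\wedge$ intersection, $\vee$ span of union; $Q^\perp=I-Q$. $\mathit{DProg}(V)$: completely positive trace-nonincreasing super-operators on $\mathcal L(\mathcal H_V)$, $\mathcal E^\dagger$ the adjoint; $\mathit{NProg}(V)$: nonempty convex closed subsets of $\mathit{DProg}(V)$. Convention: operators/super-operators are implicitly extended to $\mathcal H_{V\cup W}$ (and larger systems) by tensoring with identities; projectors are regarded on $\mathcal H_{V\cup W}$. $E(A)=\{|\psi\rangle:A|\psi\rangle=|\psi\rangle\}$; $\mathcal N(B)=\{|\psi\rangle:\langle\psi|B|\psi\rangle=0\}$; $\lceil\rho\rceil$ is the support of a positive operator. For projectors $P,Q$: $\mathbb E\models_{tot}(\{P\},\{Q\})$ iff for all finite $X\supseteq V\cup W$ and $\rho\in\mathcal D(\mathcal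 H_X)$, ${\rm tr}(P\rho)\le\inf_{\mathcal E\in\mathbb E}{\rm tr}(Q\mathcal E(\rho))$; $\mathbb E\models_{par}(\{P\},\{Q\})$ iff for all such $X,\rho$, ${\rm tr}(P\rho)\le\inf_{\mathcal E\in\mathbb E}[{\rm tr}(Q\mathcal E(\rho))+{\rm tr}(\rho)-{\rm tr}(\mathcal E(\rho))]$. $wp^a.\mathbb E.Q$ is the largest projector $P$ with $\mathbb E\models_{tot}(\{P\},\{Q\})$; $wlp^a.\mathbb E.Q$ the largest projector $P$ with $\mathbb E\models_{par}(\{P\},\{Q\})$; $sp^a.\mathbb E.P$ the smallest projector $R$ with $\mathbb E\models_{par}(\{P\},\{R\})$. *)

theory Defs
  imports Complex_Main
begin

text \<open>
Qubit variables are natural numbers (a countably infinite set).  For a finite set X of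
qubit variables, the computational basis of H_X is indexed by the subsets s of X
(s = the set of qubits in state 1).  Operators on H_X are represented as matrices
indexed by such subsets, i.e. functions of type nat set => nat set => complex that vanish
outside Pow X x Pow X; vectors as functions nat set => complex vanishing outside Pow X.
\<close>

type_synonym qop = "nat set \<Rightarrow> nat set \<Rightarrow> complex"
type_synonym qvec = "nat set \<Rightarrow> complex"
type_synonym sop = "qop \<Rightarrow> qop"

definition wf_op :: "nat set \<Rightarrow> qop \<Rightarrow> bool" where
  "wf_op X A \<longleftrightarrow> (\<forall>s t. \<not> (s \<subseteq> X \<and> t \<subseteq> X) \<longrightarrow> A s t = 0)"

definition vecs :: "nat set \<Rightarrow> qvec set" where
  "vecs X = {\<psi>. \<forall>s. \<not> s \<subseteq> X \<longrightarrow> \<psi> s = 0}"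

definition op_mult :: "nat set \<Rightarrow> qop \<Rightarrow> qop \<Rightarrow> qop" where
  "op_mult X A B = (\<lambda>s t. \<Sum>u\<in>Pow X. A s u * B u t)"

definition op_adj :: "qop \<Rightarrow> qop" where
  "op_adj A = (\<lambda>s t. cnj (A t s))"

definition op_apply :: "nat set \<Rightarrow> qop \<Rightarrow> qvec \<Rightarrow> qvec" where
  "op_apply X A \<psi> = (\<lambda>s. \<Sum>t\<in>Pow X. A s t * \<psi> t)"

definition qtr :: "nat set \<Rightarrow> qop \<Rightarrow> complex" where
  "qtr X A = (\<Sum>s\<in>Pow X. A s s)"

definition qform :: "nat set \<Rightarrow> qop \<Rightarrow> qvec \<Rightarrow> complex" where
  "qform X A \<psi> = (\<Sum>s\<in>Pow X. \<Sum>t\<in>Pow X. cnj (\<psi> s) * A s t * \<psi> t)"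

definition id_op :: "nat set \<Rightarrow> qop" where
  "id_op X = (\<lambda>s t. if s \<subseteq> X \<and> s = t then 1 else 0)"

definition is_pos :: "nat set \<Rightarrow> qop \<Rightarrow> bool" where
  "is_pos X A \<longleftrightarrow> wf_op X A \<and>
     (\<forall>\<psi>\<in>vecs X. Im (qform X A \<psi>) = 0 \<and> 0 \<le> Re (qform X A \<psi>))"

definition pdens :: "nat set \<Rightarrow> qop \<Rightarrow> bool" where
  "pdens X \<rho> \<longleftrightarrow> is_pos X \<rho> \<and> Re (qtr X \<rho>) \<le> 1"

definition is_proj :: "nat set \<Rightarrow> qop \<Rightarrow> bool" where
  "is_proj X P \<longleftrightarrow> wf_op X P \<and> op_mult X P P = P \<and> op_adj P = P"

text \<open>Image subspace (range) of an operator; projectors are identified with it.\<close>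
definition img :: "nat set \<Rightarrow> qop \<Rightarrow> qvec set" where
  "img X A = op_apply X A ` vecs X"

definition proj_le :: "nat set \<Rightarrow> qop \<Rightarrow> qop \<Rightarrow> bool" where
  "proj_le X P Q \<longleftrightarrow> img X P \<subseteq> img X Q"

definition proj_perp :: "nat set \<Rightarrow> qop \<Rightarrow> qop" where
  "proj_perp X Q = (\<lambda>s t. id_op X s t - Q s t)"

text \<open>Extension of an operator A on H_Y to H_X (X containing Y): A tensor I_{X-Y}.\<close>
definition ext_op :: "nat set \<Rightarrow> nat set \<Rightarrow> qop \<Rightarrow> qop" where
  "ext_op Y X A = (\<lambda>s t. if s \<subseteq> X \<and> t \<subseteq> X \<and> s - Y = t - Y
                          then A (s \<inter> Y) (t \<inter> Y) else 0)"

definition restr_op :: "nat set \<Rightarrow> qop \<Rightarrow> qop" where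
  "restr_op V A = (\<lambda>s t. if s \<subseteq> V \<and> t \<subseteq> V then A s t else 0)"

text \<open>Extension of a super-operator E on L(H_V) to L(H_X) (X containing V): E tensor id,
  acting blockwise on rho = sum_{a,b} rho_{ab} tensor |a><b| (a, b subsets of X - V).\<close>
definition ext_sop :: "nat set \<Rightarrow> nat set \<Rightarrow> sop \<Rightarrow> qop \<Rightarrow> qop" where
  "ext_sop V X E \<rho> = (\<lambda>s t. if s \<subseteq> X \<and> t \<subseteq> X then
      E (\<lambda>u v. if u \<subseteq> V \<and> v \<subseteq> V then \<rho> (u \<union> (s - V)) (v \<union> (t - V)) else 0)
        (s \<inter> V) (t \<inter> V)
    else 0)"

text \<open>A super-operator is represented canonically: it only reads the H_V-part of its
  argument and returns an operator on H_V.  Complete positivity: E tensor id is positive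
  for every finite extension X of V.\<close>
definition is_dprog :: "nat set \<Rightarrow> sop \<Rightarrow> bool" where
  "is_dprog V E \<longleftrightarrow>
     (\<forall>A. E A = E (restr_op V A)) \<and>
     (\<forall>A. wf_op V (E A)) \<and>
     (\<forall>c A B. E (\<lambda>s t. c * A s t + B s t) = (\<lambda>s t. c * E A s t + E B s t)) \<and>
     (\<forall>X \<rho>. finite X \<and> V \<subseteq> X \<and> is_pos X \<rho> \<longrightarrow> is_pos X (ext_sop V X E \<rho>)) \<and>
     (\<forall>\<rho>. is_pos V \<rho> \<longrightarrow> Re (qtr V (E \<rho>)) \<le> Re (qtr V \<rho>))"

text \<open>NProg(V): nonempty, convex, (topologically) closed subsets of DProg(V).  Closedness
  is sequential closedness for entrywise convergence (the space is finite dimensional).\<close>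
definition is_nprog :: "nat set \<Rightarrow> sop set \<Rightarrow> bool" where
  "is_nprog V EE \<longleftrightarrow>
     EE \<noteq> {} \<and> EE \<subseteq> {E. is_dprog V E} \<and>
     (\<forall>E1\<in>EE. \<forall>E2\<in>EE. \<forall>r::real. 0 \<le> r \<and> r \<le> 1 \<longrightarrow>
        (\<lambda>A s t. of_real r * E1 A s t + of_real (1 - r) * E2 A s t) \<in> EE) \<and>
     (\<forall>f E. (\<forall>n. f n \<in> EE) \<and> (\<forall>A s t. (\<lambda>n. f n A s t) \<longlonglongrightarrow> E A s t) \<longrightarrow> E \<in> EE)"

text \<open>The adjoint E^dagger, determined by tr(E^dagger(A) B) = tr(A E(B)); written out in
  terms of the matrix units |t><s|.\<close>
definition sop_adj :: "nat set \<Rightarrow> sop \<Rightarrow> sop" where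
  "sop_adj V E = (\<lambda>A s t. if s \<subseteq> V \<and> t \<subseteq> V then
      (\<Sum>u\<in>Pow V. \<Sum>v\<in>Pow V. A v u * E (\<lambda>a b. if a = t \<and> b = s then 1 else 0) u v)
    else 0)"

definition sat_tot :: "nat set \<Rightarrow> nat set \<Rightarrow> sop set \<Rightarrow> qop \<Rightarrow> qop \<Rightarrow> bool" where
  "sat_tot V W EE P Q \<longleftrightarrow>
     (\<forall>X \<rho>. finite X \<and> V \<union> W \<subseteq> X \<and> pdens X \<rho> \<longrightarrow>
        Re (qtr X (op_mult X (ext_op (V \<union> W) X P) \<rho>))
          \<le> (INF E\<in>EE. Re (qtr X (op_mult X (ext_op (V \<union> W) X Q) (ext_sop V X E \<rho>)))))"

definition sat_par :: "nat set \<Rightarrow> nat set \<Rightarrow> sop set \<Rightarrow> qop \<Rightarrow> qop \<Rightarrow> bool" where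
  "sat_par V W EE P Q \<longleftrightarrow>
     (\<forall>X \<rho>. finite X \<and> V \<union> W \<subseteq> X \<and> pdens X \<rho> \<longrightarrow>
        Re (qtr X (op_mult X (ext_op (V \<union> W) X P) \<rho>))
          \<le> (INF E\<in>EE. Re (qtr X (op_mult X (ext_op (V \<union> W) X Q) (ext_sop V X E \<rho>)))
                         + Re (qtr X \<rho>) - Re (qtr X (ext_sop V X E \<rho>))))"

definition wp_a :: "nat set \<Rightarrow> nat set \<Rightarrow> sop set \<Rightarrow> qop \<Rightarrow> qop" where
  "wp_a V W EE Q = (THE P. is_proj (V \<union> W) P \<and> sat_tot V W EE P (ext_op W (V \<union> W) Q) \<and>
      (\<forall>P'. is_proj (V \<union> W) P' \<and> sat_tot V W EE P' (ext_op W (V \<union> W) Q)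
              \<longrightarrow> proj_le (V \<union> W) P' P))"

definition wlp_a :: "nat set \<Rightarrow> nat set \<Rightarrow> sop set \<Rightarrow> qop \<Rightarrow> qop" where
  "wlp_a V W EE Q = (THE P. is_proj (V \<union> W) P \<and> sat_par V W EE P (ext_op W (V \<union> W) Q) \<and>
      (\<forall>P'. is_proj (V \<union> W) P' \<and> sat_par V W EE P' (ext_op W (V \<union> W) Q)
              \<longrightarrow> proj_le (V \<union> W) P' P))"

definition sp_a :: "nat set \<Rightarrow> nat set \<Rightarrow> sop set \<Rightarrow> qop \<Rightarrow> qop" where
  "sp_a V W EE P = (THE R. is_proj (V \<union> W) R \<and> sat_par V W EE (ext_op W (V \<union> W) P) R \<and>
      (\<forall>R'. is_proj (V \<union> W) R' \<and> sat_par V W EE (ext_op W (V \<union> W) P) R'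
              \<longrightarrow> proj_le (V \<union> W) R R'))"

text \<open>E(A) = {psi. A psi = psi}, N(B) = {psi. <psi|B|psi> = 0}, support of a positive
  operator (= its range), and complex linear span.\<close>
definition eig1 :: "nat set \<Rightarrow> qop \<Rightarrow> qvec set" where
  "eig1 X A = {\<psi>\<in>vecs X. op_apply X A \<psi> = \<psi>}"

definition nullq :: "nat set \<Rightarrow> qop \<Rightarrow> qvec set" where
  "nullq X B = {\<psi>\<in>vecs X. qform X B \<psi> = 0}"

definition op_supp :: "nat set \<Rightarrow> qop \<Rightarrow> qvec set" where
  "op_supp X A = img X A"

definition cspan :: "qvec set \<Rightarrow> qvec set" where
  "cspan S = {(\<lambda>s. \<Sum>i<n. c i * v i s) | (n::nat) c v. \<forall>i<n. v i \<in> S}"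

end

theory Submission
  imports Defs
begin

definition mz :: qop where "mz = (\<lambda>s t. 0)"
definition madd :: "qop \<Rightarrow> qop \<Rightarrow> qop" where "madd A B = (\<lambda>s t. A s t + B s t)"
definition msub :: "qop \<Rightarrow> qop \<Rightarrow> qop" where "msub A B = (\<lambda>s t. A s t - B s t)"
definition msc :: "complex \<Rightarrow> qop \<Rightarrow> qop" where "msc c A = (\<lambda>s t. c * A s t)"
definition col :: "qop \<Rightarrow> nat set \<Rightarrow> qvec" where "col A t = (\<lambda>s. A s t)"
definition ket :: "nat set \<Rightarrow> qvec" where "ket t = (\<lambda>s. if s = t then 1 else 0)"
definition rank1 :: "qvec \<Rightarrow> qop" where "rank1 x = (\<lambda>s t. x s * cnj (x t))"
definition nrm2 :: "nat set \<Rightarrow> qvec \<Rightarrow> complex" where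
  "nrm2 X x = (\<Sum>s\<in>Pow X. cnj (x s) * x s)"
definition herm :: "qop \<Rightarrow> bool" where "herm A \<longleftrightarrow> op_adj A = A"

lemma op_mult_assoc: "op_mult X (op_mult X A B) C = op_mult X A (op_mult X B C)"
  unfolding op_mult_def
  by (auto simp: sum_distrib_left sum_distrib_right mult.assoc intro!: ext sum.swap)

lemma qtr_cyclic: "qtr X (op_mult X A B) = qtr X (op_mult X B A)"
  unfolding qtr_def op_mult_def
  by (subst sum.swap) (simp add: mult.commute)

lemma op_mult_madd_left: "op_mult X (madd A B) C = madd (op_mult X A C) (op_mult X B C)"
  unfolding op_mult_def madd_def by (auto simp: distrib_right sum.distrib)
lemma op_mult_madd_right: "op_mult X C (madd A B) = madd (op_mult X C A) (op_mult X C B)"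
  unfolding op_mult_def madd_def by (auto simp: distrib_left sum.distrib)
lemma op_mult_msub_left: "op_mult X (msub A B) C = msub (op_mult X A C) (op_mult X B C)"
  unfolding op_mult_def msub_def by (auto simp: left_diff_distrib sum_subtractf)
lemma op_mult_msub_right: "op_mult X C (msub A B) = msub (op_mult X C A) (op_mult X C B)"
  unfolding op_mult_def msub_def by (auto simp: right_diff_distrib sum_subtractf)
lemma op_mult_msc_left: "op_mult X (msc c A) C = msc c (op_mult X A C)"
  unfolding op_mult_def msc_def by (auto simp: sum_distrib_left mult.assoc)
lemma op_mult_msc_right: "op_mult X C (msc c A) = msc c (op_mult X C A)"
  unfolding op_mult_def msc_def by (auto simp: sum_distrib_left mult.assoc mult.left_commute)
lemma op_mult_mz_left: "op_mult X mz C = mz"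
  unfolding op_mult_def mz_def by auto
lemma op_mult_mz_right: "op_mult X C mz = mz"
  unfolding op_mult_def mz_def by auto

lemma qtr_madd: "qtr X (madd A B) = qtr X A + qtr X B"
  unfolding qtr_def madd_def by (simp add: sum.distrib)
lemma qtr_msub: "qtr X (msub A B) = qtr X A - qtr X B"
  unfolding qtr_def msub_def by (simp add: sum_subtractf)
lemma qtr_msc: "qtr X (msc c A) = c * qtr X A"
  unfolding qtr_def msc_def by (simp add: sum_distrib_left)
lemma qtr_mz: "qtr X mz = 0"
  unfolding qtr_def mz_def by simp

lemma op_mult_id_left: "finite X \<Longrightarrow> wf_op X A \<Longrightarrow> op_mult X (id_op X) A = A"
  unfolding op_mult_def id_op_def wf_op_def
proof (intro ext)
  fix s t assume fin: "finite X" and w: "\<forall>s t. \<not> (s \<subseteq> X \<and> t \<subseteq> X) \<longrightarrow> A s t = 0"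
  have "(\<Sum>u\<in>Pow X. (if s \<subseteq> X \<and> s = u then 1 else 0) * A u t)
      = (\<Sum>u\<in>Pow X. if u = s then A s t else 0)"
    by (rule sum.cong) auto
  also have "\<dots> = A s t" using w fin by (auto simp: sum.delta)
  finally show "(\<Sum>u\<in>Pow X. (if s \<subseteq> X \<and> s = u then 1 else 0) * A u t) = A s t" .
qed

lemma op_mult_id_right: "finite X \<Longrightarrow> wf_op X A \<Longrightarrow> op_mult X A (id_op X) = A"
  unfolding op_mult_def id_op_def wf_op_def
proof (intro ext)
  fix s t assume fin: "finite X" and w: "\<forall>s t. \<not> (s \<subseteq> X \<and> t \<subseteq> X) \<longrightarrow> A s t = 0"
  have "(\<Sum>u\<in>Pow X. A s u * (if u \<subseteq> X \<and> u = t then 1 else 0))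
      = (\<Sum>u\<in>Pow X. if u = t then A s t else 0)"
    by (rule sum.cong) auto
  also have "\<dots> = A s t" using w fin by (auto simp: sum.delta)
  finally show "(\<Sum>u\<in>Pow X. A s u * (if u \<subseteq> X \<and> u = t then 1 else 0)) = A s t" .
qed

lemma op_adj_mult: "op_adj (op_mult X A B) = op_mult X (op_adj B) (op_adj A)"
  unfolding op_adj_def op_mult_def by (auto simp: mult.commute)

lemma op_apply_mult: "op_apply X (op_mult X A B) x = op_apply X A (op_apply X B x)"
  unfolding op_apply_def op_mult_def
  by (auto simp: sum_distrib_left sum_distrib_right mult.assoc intro!: ext sum.swap)

lemma qform_apply: "qform X A x = (\<Sum>s\<in>Pow X. cnj (x s) * op_apply X A x s)"
  unfolding qform_def op_apply_def by (simp add: sum_distrib_left mult.assoc)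

lemma wf_op_mult: "wf_op X A \<Longrightarrow> wf_op X B \<Longrightarrow> wf_op X (op_mult X A B)"
  unfolding wf_op_def op_mult_def
proof (intro allI impI)
  fix s t assume a: "\<forall>s t. \<not> (s \<subseteq> X \<and> t \<subseteq> X) \<longrightarrow> A s t = 0"
    and b: "\<forall>s t. \<not> (s \<subseteq> X \<and> t \<subseteq> X) \<longrightarrow> B s t = 0"
    and n: "\<not> (s \<subseteq> X \<and> t \<subseteq> X)"
  then show "(\<Sum>u\<in>Pow X. A s u * B u t) = 0" by (cases "s \<subseteq> X") (auto intro!: sum.neutral)
qed
lemma wf_madd: "wf_op X A \<Longrightarrow> wf_op X B \<Longrightarrow> wf_op X (madd A B)"
  unfolding wf_op_def madd_def by auto
lemma wf_msub: "wf_op X A \<Longrightarrow> wf_op X B \<Longrightarrow> wf_op X (msub A B)"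
  unfolding wf_op_def msub_def by auto
lemma wf_msc: "wf_op X A \<Longrightarrow> wf_op X (msc c A)"
  unfolding wf_op_def msc_def by auto
lemma wf_mz: "wf_op X mz"
  unfolding wf_op_def mz_def by auto
lemma wf_id: "wf_op X (id_op X)"
  unfolding wf_op_def id_op_def by auto
lemma wf_adj: "wf_op X A \<Longrightarrow> wf_op X (op_adj A)"
  unfolding wf_op_def op_adj_def by auto
lemma op_apply_vecs: "wf_op X A \<Longrightarrow> op_apply X A x \<in> vecs X"
  unfolding wf_op_def vecs_def op_apply_def by auto

lemma adj_adj: "op_adj (op_adj A) = A"
  unfolding op_adj_def by auto
lemma adj_madd: "op_adj (madd A B) = madd (op_adj A) (op_adj B)"
  unfolding op_adj_def madd_def by auto
lemma adj_msub: "op_adj (msub A B) = msub (op_adj A) (op_adj B)"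
  unfolding op_adj_def msub_def by auto
lemma adj_id: "op_adj (id_op X) = id_op X"
  unfolding op_adj_def id_op_def by (auto intro!: ext)

definition bil :: "nat set \<Rightarrow> qop \<Rightarrow> qvec \<Rightarrow> qvec \<Rightarrow> complex" where
  "bil X B x y = (\<Sum>s\<in>Pow X. \<Sum>t\<in>Pow X. cnj (x s) * B s t * y t)"

lemma qform_bil: "qform X B x = bil X B x x"
  unfolding qform_def bil_def by simp

lemma bil_add_left: "bil X B (\<lambda>u. x u + y u) z = bil X B x z + bil X B y z"
  unfolding bil_def by (simp add: distrib_right sum.distrib)
lemma bil_add_right: "bil X B z (\<lambda>u. x u + y u) = bil X B z x + bil X B z y"
  unfolding bil_def by (simp add: distrib_left sum.distrib)
lemma bil_sc_left: "bil X B (\<lambda>u. c * x u) z = cnj c * bil X B x z"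
  unfolding bil_def by (simp add: sum_distrib_left mult.assoc)
lemma bil_sc_right: "bil X B z (\<lambda>u. c * x u) = c * bil X B z x"
  unfolding bil_def by (simp add: sum_distrib_left mult.assoc mult.left_commute)

lemma bil_ket: "finite X \<Longrightarrow> s \<subseteq> X \<Longrightarrow> t \<subseteq> X \<Longrightarrow> bil X B (ket s) (ket t) = B s t"
proof -
  assume fin: "finite X" and st: "s \<subseteq> X" "t \<subseteq> X"
  have i: "\<And>a. (\<Sum>b\<in>Pow X. cnj (ket s a) * B a b * ket t b) = cnj (ket s a) * B a t"
  proof -
    fix a
    have "(\<Sum>b\<in>Pow X. cnj (ket s a) * B a b * ket t b) =
          (\<Sum>b\<in>Pow X. if b = t then cnj (ket s a) * B a t else 0)"
      by (rule sum.cong) (auto simp: ket_def)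
    also have "\<dots> = cnj (ket s a) * B a t" using fin st by (simp add: sum.delta)
    finally show "(\<Sum>b\<in>Pow X. cnj (ket s a) * B a b * ket t b) = cnj (ket s a) * B a t" .
  qed
  have "bil X B (ket s) (ket t) = (\<Sum>a\<in>Pow X. cnj (ket s a) * B a t)"
    unfolding bil_def using i by simp
  also have "\<dots> = (\<Sum>a\<in>Pow X. if a = s then B s t else 0)"
    by (rule sum.cong) (auto simp: ket_def)
  also have "\<dots> = B s t" using fin st by (simp add: sum.delta)
  finally show ?thesis .
qed

lemma bil_apply: "bil X B x y = (\<Sum>s\<in>Pow X. cnj (x s) * op_apply X B y s)"
  unfolding bil_def op_apply_def by (simp add: sum_distrib_left mult.assoc)

lemma ket_vecs: "s \<subseteq> X \<Longrightarrow> ket s \<in> vecs X"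
  unfolding ket_def vecs_def by auto

lemma vecs_lin: "x \<in> vecs X \<Longrightarrow> y \<in> vecs X \<Longrightarrow> (\<lambda>u. a * x u + b * y u) \<in> vecs X"
  unfolding vecs_def by auto

lemma qform_two:
  "qform X B (\<lambda>u. a * x u + b * y u) =
     cnj a * a * bil X B x x + cnj a * b * bil X B x y + cnj b * a * bil X B y x + cnj b * b * bil X B y y"
  unfolding qform_bil
  by (simp add: bil_add_left bil_add_right bil_sc_left bil_sc_right algebra_simps)

lemma pos_herm:
  assumes fin: "finite X" and p: "is_pos X B"
  shows "op_adj B = B"
proof (intro ext)
  fix s t
  have wf: "wf_op X B" using p by (simp add: is_pos_def)
  show "op_adj B s t = B s t"
  proof (cases "s \<subseteq> X \<and> t \<subseteq> X")
    case False
    then show ?thesis using wf unfolding wf_op_def op_adj_def by auto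
  next
    case True
    have q: "\<And>a b. Im (qform X B (\<lambda>u. a * ket s u + b * ket t u)) = 0"
      using p True unfolding is_pos_def by (auto intro!: vecs_lin ket_vecs)
    have k: "\<And>a b. qform X B (\<lambda>u. a * ket s u + b * ket t u) =
       cnj a * a * B s s + cnj a * b * B s t + cnj b * a * B t s + cnj b * b * B t t"
      using True fin by (simp add: qform_two bil_ket)
    have 1: "Im (B s s) = 0" using q[of 1 0] k[of 1 0] by simp
    have 2: "Im (B t t) = 0" using q[of 0 1] k[of 0 1] by simp
    have 3: "Im (B s t) + Im (B t s) = 0" using q[of 1 1] k[of 1 1] 1 2 by simp
    have 4: "Re (B s t) - Re (B t s) = 0" using q[of 1 \<i>] k[of 1 \<i>] 1 2 by simp
    show ?thesis unfolding op_adj_def using 3 4 by (simp add: complex_eq_iff)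
  qed
qed

lemma herm_bil: "op_adj B = B \<Longrightarrow> bil X B x y = cnj (bil X B y x)"
  unfolding bil_def
proof -
  assume h: "op_adj B = B"
  have hb: "\<And>s t. B s t = cnj (B t s)" using h unfolding op_adj_def by (metis)
  have "(\<Sum>s\<in>Pow X. \<Sum>t\<in>Pow X. cnj (x s) * B s t * y t) =
        (\<Sum>s\<in>Pow X. \<Sum>t\<in>Pow X. cnj (x s) * cnj (B t s) * y t)" by (simp add: hb[symmetric])
  also have "\<dots> = (\<Sum>t\<in>Pow X. \<Sum>s\<in>Pow X. cnj (x s) * cnj (B t s) * y t)" by (rule sum.swap)
  also have "\<dots> = cnj (\<Sum>t\<in>Pow X. \<Sum>s\<in>Pow X. cnj (y t) * B t s * x s)"
    by (simp add: mult.commute mult.left_commute)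
  finally show "(\<Sum>s\<in>Pow X. \<Sum>t\<in>Pow X. cnj (x s) * B s t * y t) =
        cnj (\<Sum>s\<in>Pow X. \<Sum>t\<in>Pow X. cnj (y s) * B s t * x t)" .
qed

lemma nrm2_real: "nrm2 X x = of_real (\<Sum>s\<in>Pow X. (cmod (x s))^2)"
proof -
  have "\<And>s. cnj (x s) * x s = of_real ((cmod (x s))^2)"
    by (subst complex_norm_square) (simp add: mult.commute)
  then show ?thesis unfolding nrm2_def of_real_sum by simp
qed

lemma nrm2_zero:
  assumes fin: "finite X" and x: "x \<in> vecs X" and n: "nrm2 X x = 0"
  shows "x = (\<lambda>_. 0)"
proof (intro ext)
  fix s
  have "(\<Sum>s\<in>Pow X. (cmod (x s))^2) = 0" using n by (metis nrm2_real of_real_eq_0_iff)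
  then have "\<forall>s\<in>Pow X. (cmod (x s))^2 = 0" using fin by (subst (asm) sum_nonneg_eq_0_iff) auto
  then show "x s = 0" using x unfolding vecs_def by (cases "s \<subseteq> X") auto
qed

lemma neg_aux: "(m::real) \<ge> 0 \<Longrightarrow> n > 0 \<Longrightarrow> r = n/(m+1) \<Longrightarrow> r^2 * m - 2 * r * n < 0"
proof -
  assume m0: "m \<ge> 0" and np: "n > 0" and rd: "r = n/(m+1)"
  have e: "(m+1)*r = n" using m0 rd by simp
  have "(m+1)^2 * (r^2*m - 2*r*n) = ((m+1)*r)^2 * m - 2*((m+1)*r)*(m+1)*n"
    by (simp add: power2_eq_square algebra_simps)
  also have "\<dots> = - (n^2 * (m + 2))" using e by (simp add: power2_eq_square algebra_simps)
  also have "\<dots> < 0" using np m0 by simp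
  finally have "(m+1)^2 * (r^2*m - 2*r*n) < 0" .
  moreover have "(m+1)^2 > 0" using m0 by simp
  ultimately show ?thesis by (simp add: mult_less_0_iff)
qed

lemma kill:
  fixes x :: qvec
  assumes fin: "finite X" and p: "is_pos X B" and x: "x \<in> vecs X" and q: "qform X B x = 0"
  shows "op_apply X B x = (\<lambda>_. 0)"
proof -
  have wf: "wf_op X B" using p by (simp add: is_pos_def)
  have h: "op_adj B = B" using pos_herm[OF fin p] .
  define y where "y = op_apply X B x"
  have yv: "y \<in> vecs X" unfolding y_def using wf by (rule op_apply_vecs)
  have byx: "bil X B y x = nrm2 X y" unfolding bil_apply nrm2_def y_def by simp
  have bxy: "bil X B x y = nrm2 X y" using herm_bil[OF h, of X x y] byx by (simp add: nrm2_real)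
  define n where "n = (\<Sum>s\<in>Pow X. (cmod (y s))^2)"
  have n0: "n \<ge> 0" unfolding n_def by (simp add: sum_nonneg)
  have nn: "nrm2 X y = of_real n" unfolding n_def by (simp add: nrm2_real)
  define m where "m = Re (qform X B y)"
  have m0: "m \<ge> 0" and mi: "Im (qform X B y) = 0" using p yv unfolding is_pos_def m_def by auto
  have qy: "qform X B y = of_real m" using mi unfolding m_def by (simp add: complex_eq_iff)
  have "n = 0"
  proof (rule ccontr)
    assume "n \<noteq> 0"
    then have npos: "n > 0" using n0 by simp
    define r where "r = n / (m + 1)"
    have "qform X B (\<lambda>u. 1 * x u + (- of_real r) * y u) =
        of_real (r^2 * m - 2 * r * n)"
      unfolding qform_two using q qy bxy byx nn
      by (simp add: qform_bil[symmetric] algebra_simps power2_eq_square)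
    moreover have "(\<lambda>u. 1 * x u + (- of_real r) * y u) \<in> vecs X" using x yv by (rule vecs_lin)
    ultimately have "0 \<le> r^2 * m - 2 * r * n" using p unfolding is_pos_def by force
    moreover have "r^2 * m - 2 * r * n < 0" using neg_aux[OF m0 npos r_def] .
    ultimately show False by linarith
  qed
  then have "nrm2 X y = 0" using nn by simp
  then show ?thesis using nrm2_zero[OF fin yv] unfolding y_def by simp
qed

lemma op_apply_id: "finite X \<Longrightarrow> x \<in> vecs X \<Longrightarrow> op_apply X (id_op X) x = x"
proof (intro ext)
  fix s assume fin: "finite X" and x: "x \<in> vecs X"
  have "op_apply X (id_op X) x s = (\<Sum>t\<in>Pow X. if t = s then (if s \<subseteq> X then x s else 0) else 0)"
    unfolding op_apply_def id_op_def by (rule sum.cong) auto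
  also have "\<dots> = x s" using fin x unfolding vecs_def by (auto simp: sum.delta)
  finally show "op_apply X (id_op X) x s = x s" .
qed

lemma qform_id: "finite X \<Longrightarrow> x \<in> vecs X \<Longrightarrow> qform X (id_op X) x = nrm2 X x"
  unfolding qform_apply nrm2_def by (simp add: op_apply_id)

lemma nrm2_Re: "0 \<le> Re (nrm2 X x) \<and> Im (nrm2 X x) = 0"
  unfolding nrm2_real by (simp add: sum_nonneg)

lemma id_pos: "finite X \<Longrightarrow> is_pos X (id_op X)"
  unfolding is_pos_def using wf_id qform_id nrm2_Re by simp

lemma adj_move:
  assumes h: "op_adj M = M"
  shows "(\<Sum>s\<in>Pow X. cnj (x s) * op_apply X M z s) = (\<Sum>s\<in>Pow X. cnj (op_apply X M x s) * z s)"
proof -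
  have "(\<Sum>s\<in>Pow X. cnj (x s) * op_apply X M z s) = bil X M x z" by (simp add: bil_apply)
  also have "\<dots> = cnj (bil X M z x)" by (rule herm_bil[OF h])
  also have "\<dots> = (\<Sum>s\<in>Pow X. cnj (op_apply X M x s) * z s)"
    by (simp add: bil_apply mult.commute)
  finally show ?thesis .
qed

lemma qform_conj:
  assumes h: "op_adj M = M"
  shows "qform X (op_mult X (op_mult X M R) M) x = qform X R (op_apply X M x)"
  unfolding qform_apply op_apply_mult using adj_move[OF h] by simp

lemma pos_conj:
  assumes p: "is_pos X R" and h: "op_adj M = M" and w: "wf_op X M"
  shows "is_pos X (op_mult X (op_mult X M R) M)"
  using p w unfolding is_pos_def
  by (simp add: qform_conj[OF h] wf_op_mult op_apply_vecs)

lemma proj_pos: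
  assumes fin: "finite X" and p: "is_proj X P"
  shows "is_pos X P"
proof -
  have w: "wf_op X P" and m: "op_mult X P P = P" and h: "op_adj P = P"
    using p unfolding is_proj_def by auto
  have "op_mult X (op_mult X P (id_op X)) P = P" using m by (simp add: op_mult_id_right[OF fin w])
  then show ?thesis using pos_conj[OF id_pos[OF fin] h w] by simp
qed

lemma col_vecs: "wf_op X P \<Longrightarrow> col P s \<in> vecs X"
  unfolding wf_op_def vecs_def col_def by auto

lemma tr_proj:
  assumes fin: "finite X" and p: "is_proj X P"
  shows "qtr X (op_mult X B P) = (\<Sum>s\<in>Pow X. qform X B (col P s))"
proof -
  have w: "wf_op X P" and m: "op_mult X P P = P" and h: "op_adj P = P"
    using p unfolding is_proj_def by auto
  have hc: "\<And>a s. cnj (P a s) = P s a" using h unfolding op_adj_def by metis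
  have "(\<Sum>s\<in>Pow X. qform X B (col P s)) = qtr X (op_mult X (op_mult X P B) P)"
    unfolding qform_def col_def qtr_def op_mult_def hc
    by (simp add: sum_distrib_right) (rule sum.cong[OF refl], rule sum.swap)
  also have "\<dots> = qtr X (op_mult X P (op_mult X B P))" by (simp add: op_mult_assoc)
  also have "\<dots> = qtr X (op_mult X (op_mult X B P) P)" by (rule qtr_cyclic)
  also have "\<dots> = qtr X (op_mult X B P)" by (simp add: op_mult_assoc m)
  finally show ?thesis by simp
qed

lemma tr_pos:
  assumes fin: "finite X" and b: "is_pos X B" and p: "is_proj X P"
  shows "Im (qtr X (op_mult X B P)) = 0 \<and> 0 \<le> Re (qtr X (op_mult X B P))"
proof -
  have w: "wf_op X P" using p unfolding is_proj_def by auto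
  have "\<forall>s. Im (qform X B (col P s)) = 0 \<and> 0 \<le> Re (qform X B (col P s))"
    using b col_vecs[OF w] unfolding is_pos_def by auto
  then show ?thesis unfolding tr_proj[OF fin p] by (simp add: Re_sum Im_sum sum_nonneg)
qed

lemma op_mult_col: "op_mult X A B s t = op_apply X A (col B t) s"
  unfolding op_mult_def op_apply_def col_def by simp

lemma K_lemma:
  assumes fin: "finite X" and b: "is_pos X B" and p: "is_proj X P"
    and r: "Re (qtr X (op_mult X B P)) \<le> 0"
  shows "op_mult X B P = mz"
proof (intro ext)
  fix a s
  have w: "wf_op X P" using p unfolding is_proj_def by auto
  have nn: "\<forall>s. Im (qform X B (col P s)) = 0 \<and> 0 \<le> Re (qform X B (col P s))"
    using b col_vecs[OF w] unfolding is_pos_def by auto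
  have "(\<Sum>s\<in>Pow X. Re (qform X B (col P s))) \<le> 0" using r unfolding tr_proj[OF fin p] by (simp add: Re_sum)
  then have "(\<Sum>s\<in>Pow X. Re (qform X B (col P s))) = 0" using nn by (meson antisym sum_nonneg)
  then have z: "\<forall>s\<in>Pow X. Re (qform X B (col P s)) = 0" using fin nn by (subst (asm) sum_nonneg_eq_0_iff) auto
  show "op_mult X B P a s = mz a s"
  proof (cases "s \<subseteq> X")
    case True
    then have "qform X B (col P s) = 0" using z nn by (simp add: complex_eq_iff)
    then have "op_apply X B (col P s) = (\<lambda>_. 0)" using kill[OF fin b col_vecs[OF w]] by simp
    then show ?thesis by (simp add: op_mult_col mz_def)
  next
    case False
    then have "\<forall>u. P u s = 0" using w unfolding wf_op_def by auto
    then show ?thesis by (simp add: op_mult_def mz_def)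
  qed
qed

lemma col_ket: "finite X \<Longrightarrow> t \<subseteq> X \<Longrightarrow> col B t = op_apply X B (ket t)"
proof (intro ext)
  fix s assume fin: "finite X" and t: "t \<subseteq> X"
  have "op_apply X B (ket t) s = (\<Sum>u\<in>Pow X. if u = t then B s t else 0)"
    unfolding op_apply_def ket_def by (rule sum.cong) auto
  also have "\<dots> = B s t" using fin t by (simp add: sum.delta)
  finally show "col B t s = op_apply X B (ket t) s" by (simp add: col_def)
qed

lemma col_img: "finite X \<Longrightarrow> t \<subseteq> X \<Longrightarrow> col B t \<in> img X B"
  unfolding img_def using col_ket ket_vecs by auto

lemma mult_fix:
  assumes fin: "finite X" and w: "wf_op X B" and f: "\<forall>x\<in>img X B. op_apply X A x = x"
  shows "op_mult X A B = B"
proof (intro ext)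
  fix s t
  show "op_mult X A B s t = B s t"
  proof (cases "t \<subseteq> X")
    case True
    then show ?thesis using f col_img[OF fin True, of B] by (simp add: op_mult_col col_def)
  next
    case False
    then show ?thesis using w unfolding wf_op_def op_mult_def by auto
  qed
qed

lemma mult_kill:
  assumes fin: "finite X" and w: "wf_op X B" and f: "\<forall>x\<in>img X B. op_apply X A x = (\<lambda>_. 0)"
  shows "op_mult X A B = mz"
proof (intro ext)
  fix s t
  show "op_mult X A B s t = mz s t"
  proof (cases "t \<subseteq> X")
    case True
    then show ?thesis using f col_img[OF fin True, of B] by (simp add: op_mult_col col_def mz_def)
  next
    case False
    then show ?thesis using w unfolding wf_op_def op_mult_def mz_def by auto
  qed
qed

lemma img_proj:
  assumes fin: "finite X" and p: "is_proj X P"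
  shows "img X P = {x\<in>vecs X. op_apply X P x = x}"
proof -
  have w: "wf_op X P" and m: "op_mult X P P = P" using p unfolding is_proj_def by auto
  show ?thesis
  proof
    show "img X P \<subseteq> {x\<in>vecs X. op_apply X P x = x}"
      unfolding img_def using m op_apply_vecs[OF w] by (auto simp: op_apply_mult[symmetric])
    show "{x\<in>vecs X. op_apply X P x = x} \<subseteq> img X P"
      unfolding img_def by (auto intro: image_eqI[where x=x for x, OF sym])
  qed
qed

lemma img_proj_fix: "finite X \<Longrightarrow> is_proj X P \<Longrightarrow> \<forall>x\<in>img X P. op_apply X P x = x"
  using img_proj by auto

lemma proj_unique:
  assumes fin: "finite X" and p1: "is_proj X P1" and p2: "is_proj X P2" and e: "img X P1 = img X P2"
  shows "P1 = P2"
proof -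
  have w1: "wf_op X P1" and h1: "op_adj P1 = P1" using p1 unfolding is_proj_def by auto
  have w2: "wf_op X P2" and h2: "op_adj P2 = P2" using p2 unfolding is_proj_def by auto
  have a: "op_mult X P2 P1 = P1" using mult_fix[OF fin w1] img_proj_fix[OF fin p2] e by auto
  have b: "op_mult X P1 P2 = P2" using mult_fix[OF fin w2] img_proj_fix[OF fin p1] e by auto
  have "P1 = op_adj (op_mult X P2 P1)" using a h1 by simp
  also have "\<dots> = op_mult X P1 P2" by (simp add: op_adj_mult h1 h2)
  also have "\<dots> = P2" by (rule b)
  finally show ?thesis .
qed

lemma perp_msub: "proj_perp X P = msub (id_op X) P"
  unfolding proj_perp_def msub_def by simp

lemma proj_perp_proj:
  assumes fin: "finite X" and p: "is_proj X P"
  shows "is_proj X (proj_perp X P)"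
proof -
  have w: "wf_op X P" and m: "op_mult X P P = P" and h: "op_adj P = P"
    using p unfolding is_proj_def by auto
  have "op_mult X (msub (id_op X) P) (msub (id_op X) P) = msub (id_op X) P"
    unfolding op_mult_msub_left op_mult_msub_right
    by (simp add: op_mult_id_left[OF fin] op_mult_id_right[OF fin] w wf_id m msub_def)
  then show ?thesis unfolding is_proj_def perp_msub
    using w wf_id by (simp add: wf_msub adj_msub adj_id h)
qed

lemma split_int: "u \<subseteq> Y \<Longrightarrow> a \<inter> Y = {} \<Longrightarrow> (u \<union> a) \<inter> Y = u"
  by auto
lemma split_diff: "u \<subseteq> Y \<Longrightarrow> a \<inter> Y = {} \<Longrightarrow> (u \<union> a) - Y = a"
  by auto

lemma pow_split_bij:
  assumes "Y \<subseteq> X"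
  shows "bij_betw (\<lambda>(u, a). u \<union> a) (Pow Y \<times> Pow (X - Y)) (Pow X)"
proof (rule bij_betwI')
  fix p q assume p: "p \<in> Pow Y \<times> Pow (X - Y)" and q: "q \<in> Pow Y \<times> Pow (X - Y)"
  obtain u a where pu: "p = (u, a)" by (cases p)
  obtain u' a' where qu: "q = (u', a')" by (cases q)
  show "((\<lambda>(u, a). u \<union> a) p = (\<lambda>(u, a). u \<union> a) q) = (p = q)"
  proof
    assume e: "(\<lambda>(u, a). u \<union> a) p = (\<lambda>(u, a). u \<union> a) q"
    then have "u \<union> a = u' \<union> a'" using pu qu by simp
    then have "(u \<union> a) \<inter> Y = (u' \<union> a') \<inter> Y" and "(u \<union> a) - Y = (u' \<union> a') - Y" by simp_all
    then have "u = u'" and "a = a'" using p q pu qu by (auto simp: split_int split_diff)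
    then show "p = q" using pu qu by simp
  qed simp
next
  fix p assume "p \<in> Pow Y \<times> Pow (X - Y)"
  then show "(\<lambda>(u, a). u \<union> a) p \<in> Pow X" using assms by auto
next
  fix s assume "s \<in> Pow X"
  then show "\<exists>p\<in>Pow Y \<times> Pow (X - Y). s = (\<lambda>(u, a). u \<union> a) p"
    by (intro bexI[of _ "(s \<inter> Y, s - Y)"]) auto
qed

lemma pow_split:
  assumes fin: "finite X" and YX: "Y \<subseteq> X"
  shows "(\<Sum>s\<in>Pow X. f s) = (\<Sum>a\<in>Pow (X - Y). \<Sum>u\<in>Pow Y. f (u \<union> a))"
proof -
  have "(\<Sum>s\<in>Pow X. f s) = (\<Sum>p\<in>Pow Y \<times> Pow (X - Y). f ((\<lambda>(u, a). u \<union> a) p))"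
    using sum.reindex_bij_betw[OF pow_split_bij[OF YX], of f] by simp
  also have "\<dots> = (\<Sum>u\<in>Pow Y. \<Sum>a\<in>Pow (X - Y). f (u \<union> a))"
    by (simp add: sum.cartesian_product split_def)
  also have "\<dots> = (\<Sum>a\<in>Pow (X - Y). \<Sum>u\<in>Pow Y. f (u \<union> a))" by (rule sum.swap)
  finally show ?thesis .
qed

lemma ext_wf: "wf_op X (ext_op Y X A)"
  unfolding wf_op_def ext_op_def by auto

lemma ext_self: "wf_op Y A \<Longrightarrow> ext_op Y Y A = A"
proof (intro ext)
  fix s t assume w: "wf_op Y A"
  show "ext_op Y Y A s t = A s t"
  proof (cases "s \<subseteq> Y \<and> t \<subseteq> Y")
    case True then have "s - Y = t - Y" "s \<inter> Y = s" "t \<inter> Y = t" by auto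
    then show ?thesis using True unfolding ext_op_def by simp
  next
    case False then show ?thesis using w unfolding ext_op_def wf_op_def by auto
  qed
qed

lemma ext_comp:
  assumes "W \<subseteq> Y" "Y \<subseteq> X"
  shows "ext_op Y X (ext_op W Y A) = ext_op W X A"
proof (intro ext)
  fix s t
  have i: "s \<inter> Y \<inter> W = s \<inter> W" "t \<inter> Y \<inter> W = t \<inter> W" using assms by auto
  have e: "(s - Y = t - Y \<and> s \<inter> Y - W = t \<inter> Y - W) = (s - W = t - W)"
  proof
    assume "s - Y = t - Y \<and> s \<inter> Y - W = t \<inter> Y - W"
    then have "(s - Y) \<union> (s \<inter> Y - W) = (t - Y) \<union> (t \<inter> Y - W)" by simp
    moreover have "s - W = (s - Y) \<union> (s \<inter> Y - W)" "t - W = (t - Y) \<union> (t \<inter> Y - W)" using assms by auto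
    ultimately show "s - W = t - W" by simp
  next
    assume a: "s - W = t - W"
    have "s - Y = (s - W) - Y" "t - Y = (t - W) - Y" using assms by auto
    moreover have "s \<inter> Y - W = (s - W) \<inter> Y" "t \<inter> Y - W = (t - W) \<inter> Y" by auto
    ultimately show "s - Y = t - Y \<and> s \<inter> Y - W = t \<inter> Y - W" using a by simp
  qed
  have sub: "s \<inter> Y \<subseteq> Y" "t \<inter> Y \<subseteq> Y" by auto
  show "ext_op Y X (ext_op W Y A) s t = ext_op W X A s t"
  proof (cases "s - W = t - W")
    case True
    then have "s - Y = t - Y" "s \<inter> Y - W = t \<inter> Y - W" using e by auto
    then show ?thesis unfolding ext_op_def i using sub True by simp
  next
    case False
    then have ne: "\<not> (s - Y = t - Y \<and> s \<inter> Y - W = t \<inter> Y - W)" using e by simp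
    then show ?thesis unfolding ext_op_def i using sub False by (cases "s - Y = t - Y") simp_all
  qed
qed

lemma ext_adj: "op_adj (ext_op Y X A) = ext_op Y X (op_adj A)"
  unfolding op_adj_def ext_op_def by (auto intro!: ext)

lemma ext_madd: "ext_op Y X (madd A B) = madd (ext_op Y X A) (ext_op Y X B)"
  unfolding madd_def ext_op_def by (auto intro!: ext)
lemma ext_msub: "ext_op Y X (msub A B) = msub (ext_op Y X A) (ext_op Y X B)"
  unfolding msub_def ext_op_def by (auto intro!: ext)
lemma ext_msc: "ext_op Y X (msc c A) = msc c (ext_op Y X A)"
  unfolding msc_def ext_op_def by (auto intro!: ext)
lemma ext_mz: "ext_op Y X mz = mz"
  unfolding mz_def ext_op_def by (auto intro!: ext)

lemma ext_id:
  assumes "Y \<subseteq> X"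
  shows "ext_op Y X (id_op Y) = id_op X"
proof (intro ext)
  fix s t
  have "(s - Y = t - Y \<and> s \<inter> Y = t \<inter> Y) = (s = t)" by blast
  then show "ext_op Y X (id_op Y) s t = id_op X s t"
    unfolding ext_op_def id_op_def by auto
qed

lemma ext_mult:
  assumes fin: "finite X" and YX: "Y \<subseteq> X"
  shows "op_mult X (ext_op Y X A) (ext_op Y X B) = ext_op Y X (op_mult Y A B)"
proof (intro ext)
  fix s t
  have "op_mult X (ext_op Y X A) (ext_op Y X B) s t =
     (\<Sum>a\<in>Pow (X - Y). \<Sum>u\<in>Pow Y. ext_op Y X A s (u \<union> a) * ext_op Y X B (u \<union> a) t)"
    unfolding op_mult_def by (rule pow_split[OF fin YX])
  also have "\<dots> = (\<Sum>a\<in>Pow (X - Y). if a = s - Y then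
        (if s \<subseteq> X \<and> t \<subseteq> X \<and> s - Y = t - Y then (\<Sum>u\<in>Pow Y. A (s \<inter> Y) u * B u (t \<inter> Y)) else 0)
        else 0)"
  proof (rule sum.cong[OF refl])
    fix a assume a: "a \<in> Pow (X - Y)"
    then have a2: "a \<inter> Y = {}" "a \<subseteq> X" by auto
    have t: "\<And>u. u \<in> Pow Y \<Longrightarrow> ext_op Y X A s (u \<union> a) * ext_op Y X B (u \<union> a) t =
       (if a = s - Y then (if s \<subseteq> X \<and> t \<subseteq> X \<and> s - Y = t - Y then A (s \<inter> Y) u * B u (t \<inter> Y) else 0) else 0)"
    proof -
      fix u assume "u \<in> Pow Y"
      then have h: "(u \<union> a) \<inter> Y = u" "(u \<union> a) - Y = a" "u \<union> a \<subseteq> X" using a2 YX by auto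
      show "ext_op Y X A s (u \<union> a) * ext_op Y X B (u \<union> a) t =
       (if a = s - Y then (if s \<subseteq> X \<and> t \<subseteq> X \<and> s - Y = t - Y then A (s \<inter> Y) u * B u (t \<inter> Y) else 0) else 0)"
        unfolding ext_op_def h(1) h(2) using h(3) by (cases "a = s - Y"; cases "a = t - Y") auto
    qed
    show "(\<Sum>u\<in>Pow Y. ext_op Y X A s (u \<union> a) * ext_op Y X B (u \<union> a) t) =
      (if a = s - Y then
        (if s \<subseteq> X \<and> t \<subseteq> X \<and> s - Y = t - Y then (\<Sum>u\<in>Pow Y. A (s \<inter> Y) u * B u (t \<inter> Y)) else 0)
        else 0)"
    proof -
      have "(\<Sum>u\<in>Pow Y. ext_op Y X A s (u \<union> a) * ext_op Y X B (u \<union> a) t) =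
        (\<Sum>u\<in>Pow Y. (if a = s - Y then (if s \<subseteq> X \<and> t \<subseteq> X \<and> s - Y = t - Y then A (s \<inter> Y) u * B u (t \<inter> Y) else 0) else 0))"
        by (rule sum.cong[OF refl], erule t)
      then show ?thesis by (cases "a = s - Y"; cases "s \<subseteq> X"; cases "t \<subseteq> X"; cases "s - Y = t - Y") simp_all
    qed
  qed
  also have "\<dots> = ext_op Y X (op_mult Y A B) s t"
    unfolding ext_op_def op_mult_def using fin by (auto simp: sum.delta)
  finally show "op_mult X (ext_op Y X A) (ext_op Y X B) s t = ext_op Y X (op_mult Y A B) s t" .
qed

lemma ext_proj:
  assumes fin: "finite X" and YX: "Y \<subseteq> X" and p: "is_proj Y P"
  shows "is_proj X (ext_op Y X P)"
  using p unfolding is_proj_def by (simp add: ext_wf ext_mult[OF fin YX] ext_adj)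

lemma ext_perp:
  assumes YX: "Y \<subseteq> X"
  shows "ext_op Y X (proj_perp Y P) = proj_perp X (ext_op Y X P)"
  unfolding perp_msub ext_msub ext_id[OF YX] ..

definition eu :: "nat set \<Rightarrow> nat set \<Rightarrow> qop" where
  "eu u v = (\<lambda>a b. if a = u \<and> b = v then 1 else 0)"

lemma dprog_restr: "is_dprog V E \<Longrightarrow> E A = E (restr_op V A)"
  unfolding is_dprog_def by (drule conjunct1) (erule allE, assumption)
lemma dprog_wf: "is_dprog V E \<Longrightarrow> wf_op V (E A)"
  unfolding is_dprog_def by (drule conjunct2, drule conjunct1) (erule allE, assumption)
lemma dprog_lin: "is_dprog V E \<Longrightarrow> E (\<lambda>s t. c * A s t + B s t) = (\<lambda>s t. c * E A s t + E B s t)"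
  unfolding is_dprog_def by (drule conjunct2, drule conjunct2, drule conjunct1) (erule allE, erule allE, erule allE, assumption)
lemma dprog_cp: "is_dprog V E \<Longrightarrow> finite X \<Longrightarrow> V \<subseteq> X \<Longrightarrow> is_pos X \<rho> \<Longrightarrow> is_pos X (ext_sop V X E \<rho>)"
  unfolding is_dprog_def
  by (drule conjunct2, drule conjunct2, drule conjunct2, drule conjunct1) (erule allE, erule allE, erule mp, simp)
lemma dprog_tn: "is_dprog V E \<Longrightarrow> is_pos V \<rho> \<Longrightarrow> Re (qtr V (E \<rho>)) \<le> Re (qtr V \<rho>)"
  unfolding is_dprog_def
  by (drule conjunct2, drule conjunct2, drule conjunct2, drule conjunct2) (erule allE, erule mp, assumption)

lemma dprog_zero:
  assumes d: "is_dprog V E"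
  shows "E (\<lambda>s t. 0) = (\<lambda>s t. 0)"
proof -
  have "E (\<lambda>s t. 1 * (\<lambda>s t. 0) s t + (\<lambda>s t. 0) s t) =
        (\<lambda>s t. 1 * E (\<lambda>s t. 0) s t + E (\<lambda>s t. 0) s t)" by (rule dprog_lin[OF d])
  then have eq: "E (\<lambda>s t. 0) = (\<lambda>s t. E (\<lambda>s t. 0) s t + E (\<lambda>s t. 0) s t)" by simp
  show ?thesis
  proof (intro ext)
    fix s t
    have "E (\<lambda>s t. 0) s t = E (\<lambda>s t. 0) s t + E (\<lambda>s t. 0) s t"
      using fun_cong[OF fun_cong[OF eq, of s], of t] by simp
    then show "E (\<lambda>s t. 0) s t = 0" by simp
  qed
qed

lemma dprog_mz: "is_dprog V E \<Longrightarrow> E mz = mz"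
  unfolding mz_def by (rule dprog_zero)

lemma dprog_sc:
  assumes d: "is_dprog V E"
  shows "E (msc c A) = msc c (E A)"
proof -
  have "E (\<lambda>s t. c * A s t + (\<lambda>s t. 0) s t) = (\<lambda>s t. c * E A s t + E (\<lambda>s t. 0) s t)"
    by (rule dprog_lin[OF d])
  then show ?thesis unfolding msc_def dprog_zero[OF d] by simp
qed

lemma dprog_sum:
  assumes d: "is_dprog V E" and fin: "finite F"
  shows "E (\<lambda>a b. \<Sum>p\<in>F. f p * G p a b) = (\<lambda>a b. \<Sum>p\<in>F. f p * E (G p) a b)"
  using fin
proof (induction F rule: finite_induct)
  case empty
  then show ?case using dprog_zero[OF d] by simp
next
  case (insert x F)
  have "E (\<lambda>a b. \<Sum>p\<in>insert x F. f p * G p a b) =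
        E (\<lambda>a b. f x * G x a b + (\<lambda>a b. \<Sum>p\<in>F. f p * G p a b) a b)"
    using insert by simp
  also have "\<dots> = (\<lambda>a b. f x * E (G x) a b + E (\<lambda>a b. \<Sum>p\<in>F. f p * G p a b) a b)"
    by (rule dprog_lin[OF d])
  also have "\<dots> = (\<lambda>a b. \<Sum>p\<in>insert x F. f p * E (G p) a b)"
    using insert by simp
  finally show ?case .
qed

lemma restr_expand:
  assumes fin: "finite V"
  shows "restr_op V M = (\<lambda>a b. \<Sum>p\<in>Pow V \<times> Pow V. M (fst p) (snd p) * eu (fst p) (snd p) a b)"
proof (intro ext)
  fix a b
  have "(\<Sum>p\<in>Pow V \<times> Pow V. M (fst p) (snd p) * eu (fst p) (snd p) a b) =
        (\<Sum>p\<in>Pow V \<times> Pow V. if p = (a, b) then M a b else 0)"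
    by (rule sum.cong) (auto simp: eu_def)
  also have "\<dots> = restr_op V M a b" using fin by (simp add: sum.delta restr_op_def)
  finally show "restr_op V M a b = (\<Sum>p\<in>Pow V \<times> Pow V. M (fst p) (snd p) * eu (fst p) (snd p) a b)" by simp
qed

lemma dprog_expand:
  assumes d: "is_dprog V E" and fin: "finite V"
  shows "E M = (\<lambda>a b. \<Sum>u\<in>Pow V. \<Sum>v\<in>Pow V. M u v * E (eu u v) a b)"
proof -
  have "E M = E (restr_op V M)" by (rule dprog_restr[OF d])
  also have "\<dots> = (\<lambda>a b. \<Sum>p\<in>Pow V \<times> Pow V. M (fst p) (snd p) * E (eu (fst p) (snd p)) a b)"
    unfolding restr_expand[OF fin] using fin
    by (subst dprog_sum[OF d, where G = "\<lambda>p. eu (fst p) (snd p)"]) auto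
  also have "\<dots> = (\<lambda>a b. \<Sum>u\<in>Pow V. \<Sum>v\<in>Pow V. M u v * E (eu u v) a b)"
    by (simp add: sum.cartesian_product split_def)
  finally show ?thesis .
qed

lemma ext_sop_expand:
  assumes d: "is_dprog V E" and fin: "finite V" and st: "s \<subseteq> X" "t \<subseteq> X"
  shows "ext_sop V X E \<rho> s t =
    (\<Sum>u\<in>Pow V. \<Sum>v\<in>Pow V. \<rho> (u \<union> (s - V)) (v \<union> (t - V)) * E (eu u v) (s \<inter> V) (t \<inter> V))"
  unfolding ext_sop_def using st by (subst dprog_expand[OF d fin]) (auto intro!: sum.cong)

lemma ext_adj_expand:
  assumes st: "s \<subseteq> X" "t \<subseteq> X"
  shows "ext_sop V X (sop_adj V E) A t s =
    (\<Sum>u\<in>Pow V. \<Sum>v\<in>Pow V. A (v \<union> (t - V)) (u \<union> (s - V)) * E (eu (s \<inter> V) (t \<inter> V)) u v)"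
  unfolding ext_sop_def sop_adj_def eu_def using st by (auto intro!: sum.cong)

lemma cart2: "(\<Sum>t\<in>T. \<Sum>v\<in>W. h t v) = (\<Sum>p\<in>T \<times> W. h (fst p) (snd p))"
  by (simp add: sum.cartesian_product split_def)

lemma reorder4:
  "(\<Sum>t\<in>T. \<Sum>s\<in>S. \<Sum>u\<in>U. \<Sum>v\<in>W. f t s u v) =
   (\<Sum>p\<in>T \<times> W. \<Sum>q\<in>S \<times> U. f (fst p) (fst q) (snd q) (snd p))"
proof -
  have "(\<Sum>t\<in>T. \<Sum>s\<in>S. \<Sum>u\<in>U. \<Sum>v\<in>W. f t s u v) = (\<Sum>t\<in>T. \<Sum>v\<in>W. \<Sum>s\<in>S. \<Sum>u\<in>U. f t s u v)"
  proof (rule sum.cong[OF refl])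
    fix t
    have "(\<Sum>s\<in>S. \<Sum>u\<in>U. \<Sum>v\<in>W. f t s u v) = (\<Sum>s\<in>S. \<Sum>v\<in>W. \<Sum>u\<in>U. f t s u v)"
      by (rule sum.cong[OF refl], rule sum.swap)
    also have "\<dots> = (\<Sum>v\<in>W. \<Sum>s\<in>S. \<Sum>u\<in>U. f t s u v)" by (rule sum.swap)
    finally show "(\<Sum>s\<in>S. \<Sum>u\<in>U. \<Sum>v\<in>W. f t s u v) = (\<Sum>v\<in>W. \<Sum>s\<in>S. \<Sum>u\<in>U. f t s u v)" .
  qed
  also have "\<dots> = (\<Sum>p\<in>T \<times> W. \<Sum>s\<in>S. \<Sum>u\<in>U. f (fst p) s u (snd p))"
    by (rule cart2)
  also have "\<dots> = (\<Sum>p\<in>T \<times> W. \<Sum>q\<in>S \<times> U. f (fst p) (fst q) (snd q) (snd p))"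
    by (rule sum.cong[OF refl], rule cart2)
  finally show ?thesis .
qed

definition phi :: "nat set \<Rightarrow> nat set \<times> nat set \<Rightarrow> nat set \<times> nat set" where
  "phi V p = (snd p \<union> (fst p - V), fst p \<inter> V)"

lemma phi_in: "V \<subseteq> X \<Longrightarrow> p \<in> Pow X \<times> Pow V \<Longrightarrow> phi V p \<in> Pow X \<times> Pow V"
  unfolding phi_def by auto

lemma phi_phi: "p \<in> Pow X \<times> Pow V \<Longrightarrow> phi V (phi V p) = p"
  unfolding phi_def by (cases p) auto

lemma phi_bij: "V \<subseteq> X \<Longrightarrow> bij_betw (phi V) (Pow X \<times> Pow V) (Pow X \<times> Pow V)"
proof (rule bij_betw_byWitness[where f' = "phi V"])
  assume VX: "V \<subseteq> X"
  show "\<forall>a\<in>Pow X \<times> Pow V. phi V (phi V a) = a" using phi_phi by blast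
  show "\<forall>a\<in>Pow X \<times> Pow V. phi V (phi V a) = a" using phi_phi by blast
  show "phi V ` (Pow X \<times> Pow V) \<subseteq> Pow X \<times> Pow V" using phi_in[OF VX] by blast
  show "phi V ` (Pow X \<times> Pow V) \<subseteq> Pow X \<times> Pow V" using phi_in[OF VX] by blast
qed

lemma duality:
  assumes fin: "finite X" and VX: "V \<subseteq> X" and d: "is_dprog V E"
  shows "qtr X (op_mult X A (ext_sop V X E \<rho>)) = qtr X (op_mult X (ext_sop V X (sop_adj V E) A) \<rho>)"
proof -
  have finV: "finite V" using fin VX by (rule finite_subset[rotated])
  define D where "D = Pow X \<times> Pow V"
  define f1 where "f1 = (\<lambda>t s u v. A t s * (\<rho> (u \<union> (s - V)) (v \<union> (t - V)) * E (eu u v) (s \<inter> V) (t \<inter> V)))"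
  define f2 where "f2 = (\<lambda>t s u v. A (v \<union> (t - V)) (u \<union> (s - V)) * E (eu (s \<inter> V) (t \<inter> V)) u v * \<rho> s t)"
  have L: "qtr X (op_mult X A (ext_sop V X E \<rho>)) = (\<Sum>p\<in>D. \<Sum>q\<in>D. f1 (fst p) (fst q) (snd q) (snd p))"
  proof -
    have "qtr X (op_mult X A (ext_sop V X E \<rho>)) = (\<Sum>t\<in>Pow X. \<Sum>s\<in>Pow X. \<Sum>u\<in>Pow V. \<Sum>v\<in>Pow V. f1 t s u v)"
      unfolding qtr_def op_mult_def f1_def
      apply (intro sum.cong refl)
      apply (simp only: ext_sop_expand[OF d finV] sum_distrib_left Pow_iff)
      done
    also have "\<dots> = (\<Sum>p\<in>D. \<Sum>q\<in>D. f1 (fst p) (fst q) (snd q) (snd p))"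
      unfolding D_def by (rule reorder4)
    finally show ?thesis .
  qed
  have R: "qtr X (op_mult X (ext_sop V X (sop_adj V E) A) \<rho>) = (\<Sum>p\<in>D. \<Sum>q\<in>D. f2 (fst p) (fst q) (snd q) (snd p))"
  proof -
    have "qtr X (op_mult X (ext_sop V X (sop_adj V E) A) \<rho>) = (\<Sum>t\<in>Pow X. \<Sum>s\<in>Pow X. \<Sum>u\<in>Pow V. \<Sum>v\<in>Pow V. f2 t s u v)"
      unfolding qtr_def op_mult_def f2_def
      apply (intro sum.cong refl)
      apply (simp only: ext_adj_expand sum_distrib_right Pow_iff)
      done
    also have "\<dots> = (\<Sum>p\<in>D. \<Sum>q\<in>D. f2 (fst p) (fst q) (snd q) (snd p))"
      unfolding D_def by (rule reorder4)
    finally show ?thesis .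
  qed
  have bij: "bij_betw (phi V) D D" unfolding D_def using phi_bij[OF VX] .
  have "(\<Sum>p\<in>D. \<Sum>q\<in>D. f2 (fst p) (fst q) (snd q) (snd p)) =
        (\<Sum>p\<in>D. \<Sum>q\<in>D. f2 (fst (phi V p)) (fst q) (snd q) (snd (phi V p)))"
    using sum.reindex_bij_betw[OF bij, of "\<lambda>p. \<Sum>q\<in>D. f2 (fst p) (fst q) (snd q) (snd p)"] by simp
  also have "\<dots> = (\<Sum>p\<in>D. \<Sum>q\<in>D. f2 (fst (phi V p)) (fst (phi V q)) (snd (phi V q)) (snd (phi V p)))"
  proof (rule sum.cong[OF refl])
    fix p
    show "(\<Sum>q\<in>D. f2 (fst (phi V p)) (fst q) (snd q) (snd (phi V p))) =
          (\<Sum>q\<in>D. f2 (fst (phi V p)) (fst (phi V q)) (snd (phi V q)) (snd (phi V p)))"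
      using sum.reindex_bij_betw[OF bij, of "\<lambda>q. f2 (fst (phi V p)) (fst q) (snd q) (snd (phi V p))"] by simp
  qed
  also have "\<dots> = (\<Sum>p\<in>D. \<Sum>q\<in>D. f1 (fst p) (fst q) (snd q) (snd p))"
  proof (intro sum.cong refl)
    fix p q assume p: "p \<in> D" and q: "q \<in> D"
    obtain t v where pe: "p = (t, v)" by (cases p)
    obtain s u where qe: "q = (s, u)" by (cases q)
    have v: "v \<subseteq> V" and u: "u \<subseteq> V" using p q pe qe unfolding D_def by auto
    have e1: "t \<inter> V \<union> (v \<union> (t - V) - V) = t" "s \<inter> V \<union> (u \<union> (s - V) - V) = s" using u v by auto
    have e2: "(u \<union> (s - V)) \<inter> V = u" "(v \<union> (t - V)) \<inter> V = v" using u v by auto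
    show "f2 (fst (phi V p)) (fst (phi V q)) (snd (phi V q)) (snd (phi V p)) = f1 (fst p) (fst q) (snd q) (snd p)"
      unfolding f1_def f2_def phi_def pe qe fst_conv snd_conv e1 e2 by (simp add: mult_ac)
  qed
  finally show ?thesis using L R by simp
qed

lemma sop_adj_zero: "sop_adj V E (\<lambda>u v. 0) = (\<lambda>s t. 0)"
  unfolding sop_adj_def by (auto intro!: ext)

lemma ext_sop_ext:
  assumes VY: "V \<subseteq> Y" and YX: "Y \<subseteq> X" and F0: "F (\<lambda>u v. 0) = (\<lambda>s t. 0)"
  shows "ext_sop V X F (ext_op Y X A) = ext_op Y X (ext_sop V Y F A)"
proof (intro ext)
  fix s t
  show "ext_sop V X F (ext_op Y X A) s t = ext_op Y X (ext_sop V Y F A) s t"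
  proof (cases "s \<subseteq> X \<and> t \<subseteq> X")
    case False
    then show ?thesis unfolding ext_sop_def ext_op_def by auto
  next
    case True
    have sd: "\<And>u w. u \<subseteq> V \<Longrightarrow> (u \<union> (w - V)) - Y = w - Y" using VY by auto
    have si: "\<And>u w. u \<subseteq> V \<Longrightarrow> (u \<union> (w - V)) \<inter> Y = u \<union> (w \<inter> Y - V)" using VY by auto
    have ss: "\<And>u w. u \<subseteq> V \<Longrightarrow> w \<subseteq> X \<Longrightarrow> u \<union> (w - V) \<subseteq> X" using VY YX by auto
    have sv: "s \<inter> Y \<inter> V = s \<inter> V" "t \<inter> Y \<inter> V = t \<inter> V" using VY by auto
    show ?thesis
    proof (cases "s - Y = t - Y")
      case eq: True
      have pt: "\<And>u v. u \<subseteq> V \<Longrightarrow> v \<subseteq> V \<Longrightarrow>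
          ext_op Y X A (u \<union> (s - V)) (v \<union> (t - V)) = A (u \<union> (s \<inter> Y - V)) (v \<union> (t \<inter> Y - V))"
      proof -
        fix u v assume u: "u \<subseteq> V" and v: "v \<subseteq> V"
        show "ext_op Y X A (u \<union> (s - V)) (v \<union> (t - V)) = A (u \<union> (s \<inter> Y - V)) (v \<union> (t \<inter> Y - V))"
        proof -
          have "u \<union> (s - V) \<subseteq> X" "v \<union> (t - V) \<subseteq> X" using u v VY YX True by auto
          then show ?thesis unfolding ext_op_def using True eq sd[OF u] sd[OF v] si[OF u] si[OF v] by simp
        qed
      qed
      have "(\<lambda>u v. if u \<subseteq> V \<and> v \<subseteq> V then ext_op Y X A (u \<union> (s - V)) (v \<union> (t - V)) else 0) =
            (\<lambda>u v. if u \<subseteq> V \<and> v \<subseteq> V then A (u \<union> (s \<inter> Y - V)) (v \<union> (t \<inter> Y - V)) else 0)"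
        using pt by (intro ext) simp
      then show ?thesis using True eq unfolding ext_sop_def ext_op_def by (simp add: sv)
    next
      case ne: False
      have "(\<lambda>u v. if u \<subseteq> V \<and> v \<subseteq> V then ext_op Y X A (u \<union> (s - V)) (v \<union> (t - V)) else 0) =
            (\<lambda>u v. 0)"
      proof (intro ext)
        fix u v
        show "(if u \<subseteq> V \<and> v \<subseteq> V then ext_op Y X A (u \<union> (s - V)) (v \<union> (t - V)) else 0) = 0"
        proof (cases "u \<subseteq> V \<and> v \<subseteq> V")
          case True
          then have "u \<union> (s - V) - Y = s - Y" "v \<union> (t - V) - Y = t - Y" using sd by auto
          then show ?thesis unfolding ext_op_def using ne True by simp
        next
          case False
          then show ?thesis by (rule if_not_P)
        qed
      qed
      then show ?thesis using True ne F0 unfolding ext_sop_def ext_op_def by simp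
    qed
  qed
qed

definition blk :: "nat set \<Rightarrow> nat set \<Rightarrow> qop \<Rightarrow> qop" where
  "blk V a \<rho> = (\<lambda>u v. if u \<subseteq> V \<and> v \<subseteq> V then \<rho> (u \<union> a) (v \<union> a) else 0)"

lemma sum_Sa:
  assumes fin: "finite X" and VX: "V \<subseteq> X" and a: "a \<subseteq> X - V"
    and z: "\<And>s. s \<subseteq> X \<Longrightarrow> s - V \<noteq> a \<Longrightarrow> f s = 0"
  shows "(\<Sum>s\<in>Pow X. f s) = (\<Sum>u\<in>Pow V. f (u \<union> a))"
proof -
  have "(\<Sum>s\<in>Pow X. f s) = (\<Sum>b\<in>Pow (X - V). \<Sum>u\<in>Pow V. f (u \<union> b))"
    by (rule pow_split[OF fin VX])
  also have "\<dots> = (\<Sum>b\<in>Pow (X - V). if b = a then (\<Sum>u\<in>Pow V. f (u \<union> a)) else 0)"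
  proof (rule sum.cong[OF refl])
    fix b assume b: "b \<in> Pow (X - V)"
    show "(\<Sum>u\<in>Pow V. f (u \<union> b)) = (if b = a then (\<Sum>u\<in>Pow V. f (u \<union> a)) else 0)"
    proof (cases "b = a")
      case False
      have "\<And>u. u \<in> Pow V \<Longrightarrow> f (u \<union> b) = 0"
      proof -
        fix u assume "u \<in> Pow V"
        then have "u \<union> b \<subseteq> X" "(u \<union> b) - V = b" using b VX by auto
        then show "f (u \<union> b) = 0" using z False by simp
      qed
      then show ?thesis using False by simp
    qed simp
  qed
  also have "\<dots> = (\<Sum>u\<in>Pow V. f (u \<union> a))" using fin a by (simp add: sum.delta)
  finally show ?thesis .
qed

lemma blk_pos:
  assumes fin: "finite X" and VX: "V \<subseteq> X" and p: "is_pos X \<rho>" and a: "a \<subseteq> X - V"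
  shows "is_pos V (blk V a \<rho>)"
  unfolding is_pos_def
proof (intro conjI ballI)
  show "wf_op V (blk V a \<rho>)" unfolding wf_op_def blk_def by auto
  fix x assume x: "x \<in> vecs V"
  define y where "y = (\<lambda>s. if s \<subseteq> X \<and> s - V = a then x (s \<inter> V) else 0)"
  have yv: "y \<in> vecs X" unfolding y_def vecs_def by auto
  have yu: "\<And>u. u \<subseteq> V \<Longrightarrow> y (u \<union> a) = x u"
  proof -
    fix u assume u: "u \<subseteq> V"
    then have "u \<union> a \<subseteq> X" "(u \<union> a) - V = a" "(u \<union> a) \<inter> V = u" using a VX by auto
    then show "y (u \<union> a) = x u" unfolding y_def by simp
  qed
  have yz: "\<And>s. s \<subseteq> X \<Longrightarrow> s - V \<noteq> a \<Longrightarrow> y s = 0" unfolding y_def by simp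
  have "qform X \<rho> y = (\<Sum>s\<in>Pow X. cnj (y s) * (\<Sum>t\<in>Pow X. \<rho> s t * y t))"
    unfolding qform_def by (simp add: sum_distrib_left mult.assoc)
  also have "\<dots> = (\<Sum>s\<in>Pow X. cnj (y s) * (\<Sum>v\<in>Pow V. \<rho> s (v \<union> a) * x v))"
  proof (rule sum.cong[OF refl])
    fix s
    have "(\<Sum>t\<in>Pow X. \<rho> s t * y t) = (\<Sum>v\<in>Pow V. \<rho> s (v \<union> a) * y (v \<union> a))"
      by (rule sum_Sa[OF fin VX a]) (simp add: yz)
    also have "\<dots> = (\<Sum>v\<in>Pow V. \<rho> s (v \<union> a) * x v)" by (rule sum.cong) (auto simp: yu)
    finally show "cnj (y s) * (\<Sum>t\<in>Pow X. \<rho> s t * y t) = cnj (y s) * (\<Sum>v\<in>Pow V. \<rho> s (v \<union> a) * x v)" by simp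
  qed
  also have "\<dots> = (\<Sum>u\<in>Pow V. cnj (y (u \<union> a)) * (\<Sum>v\<in>Pow V. \<rho> (u \<union> a) (v \<union> a) * x v))"
    by (rule sum_Sa[OF fin VX a]) (simp add: yz)
  also have "\<dots> = qform V (blk V a \<rho>) x"
    unfolding qform_def blk_def by (auto simp: yu sum_distrib_left mult.assoc intro!: sum.cong)
  finally have e: "qform V (blk V a \<rho>) x = qform X \<rho> y" by simp
  show "Im (qform V (blk V a \<rho>) x) = 0" "0 \<le> Re (qform V (blk V a \<rho>) x)"
    using p yv unfolding e is_pos_def by auto
qed

lemma tn_ext:
  assumes fin: "finite X" and VX: "V \<subseteq> X" and d: "is_dprog V E" and p: "is_pos X \<rho>"
  shows "Re (qtr X (ext_sop V X E \<rho>)) \<le> Re (qtr X \<rho>)"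
proof -
  have e1: "qtr X (ext_sop V X E \<rho>) = (\<Sum>a\<in>Pow (X - V). qtr V (E (blk V a \<rho>)))"
    unfolding qtr_def
  proof (subst pow_split[OF fin VX], rule sum.cong[OF refl], rule sum.cong[OF refl])
    fix a u assume a: "a \<in> Pow (X - V)" and u: "u \<in> Pow V"
    then have h: "u \<union> a \<subseteq> X" "(u \<union> a) - V = a" "(u \<union> a) \<inter> V = u" using VX by auto
    show "ext_sop V X E \<rho> (u \<union> a) (u \<union> a) = E (blk V a \<rho>) u u"
      unfolding ext_sop_def blk_def h(2) h(3) using h(1) by simp
  qed
  have e2: "qtr X \<rho> = (\<Sum>a\<in>Pow (X - V). qtr V (blk V a \<rho>))"
    unfolding qtr_def blk_def by (subst pow_split[OF fin VX]) (auto intro!: sum.cong)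
  have "(\<Sum>a\<in>Pow (X - V). Re (qtr V (E (blk V a \<rho>)))) \<le> (\<Sum>a\<in>Pow (X - V). Re (qtr V (blk V a \<rho>)))"
    by (rule sum_mono) (auto intro!: dprog_tn[OF d] blk_pos[OF fin VX p])
  then show ?thesis unfolding e1 e2 by (simp add: Re_sum)
qed

lemma qform_rank1_tr: "qform X T x = qtr X (op_mult X T (rank1 x))"
  unfolding qform_def qtr_def op_mult_def rank1_def
  by (simp add: sum_distrib_left mult_ac)

lemma rank1_pos:
  assumes x: "x \<in> vecs X"
  shows "is_pos X (rank1 x)"
  unfolding is_pos_def
proof (intro conjI ballI)
  show "wf_op X (rank1 x)" using x unfolding wf_op_def vecs_def rank1_def by auto
  fix y assume "y \<in> vecs X"
  define w where "w = (\<Sum>s\<in>Pow X. cnj (y s) * x s)"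
  have "qform X (rank1 x) y = w * cnj w"
    unfolding qform_def rank1_def w_def
    by (simp add: sum_distrib_left sum_distrib_right mult_ac) (rule sum.swap)
  also have "\<dots> = of_real ((cmod w)^2)" by (rule complex_norm_square[symmetric])
  finally have e: "qform X (rank1 x) y = of_real ((cmod w)^2)" .
  show "Im (qform X (rank1 x) y) = 0" "0 \<le> Re (qform X (rank1 x) y)" unfolding e by simp_all
qed

lemma qtr_rank1: "qtr X (rank1 x) = nrm2 X x"
  unfolding qtr_def rank1_def nrm2_def by (simp add: mult.commute)

lemma wf_ext_sop: "wf_op X (ext_sop V X F A)"
  unfolding wf_op_def ext_sop_def by auto

lemma qtr_id_left: "finite X \<Longrightarrow> wf_op X A \<Longrightarrow> qtr X (op_mult X (id_op X) A) = qtr X A"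
  by (simp add: op_mult_id_left)

lemma T_dual:
  assumes fin: "finite X" and VY: "V \<subseteq> Y" and YX: "Y \<subseteq> X" and d: "is_dprog V E"
  shows "qtr X (op_mult X (ext_op Y X Z) (ext_sop V X E \<rho>)) =
         qtr X (op_mult X (ext_op Y X (ext_sop V Y (sop_adj V E) Z)) \<rho>)"
proof -
  have VX: "V \<subseteq> X" using VY YX by simp
  show ?thesis
    unfolding duality[OF fin VX d] ext_sop_ext[where F = "sop_adj V E", OF VY YX sop_adj_zero] ..
qed

lemma proj_tr_bounds:
  assumes fin: "finite X" and z: "is_proj X Z" and s: "is_pos X \<sigma>"
  shows "Im (qtr X (op_mult X Z \<sigma>)) = 0 \<and> 0 \<le> Re (qtr X (op_mult X Z \<sigma>)) \<and>
         Re (qtr X (op_mult X Z \<sigma>)) \<le> Re (qtr X \<sigma>)"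
proof -
  have ws: "wf_op X \<sigma>" using s unfolding is_pos_def by simp
  have a: "Im (qtr X (op_mult X \<sigma> Z)) = 0 \<and> 0 \<le> Re (qtr X (op_mult X \<sigma> Z))"
    by (rule tr_pos[OF fin s z])
  have b: "0 \<le> Re (qtr X (op_mult X \<sigma> (proj_perp X Z)))"
    using tr_pos[OF fin s proj_perp_proj[OF fin z]] by simp
  have "qtr X (op_mult X \<sigma> (proj_perp X Z)) = qtr X \<sigma> - qtr X (op_mult X \<sigma> Z)"
    unfolding perp_msub op_mult_msub_right qtr_msub by (simp add: op_mult_id_right[OF fin ws])
  then show ?thesis using a b by (simp add: qtr_cyclic[of X Z])
qed

lemma T_bounds:
  assumes fin: "finite X" and VY: "V \<subseteq> Y" and YX: "Y \<subseteq> X" and d: "is_dprog V E"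
    and z: "is_proj Y Z" and p: "is_pos X \<rho>"
  shows "Im (qtr X (op_mult X (ext_op Y X (ext_sop V Y (sop_adj V E) Z)) \<rho>)) = 0 \<and>
         0 \<le> Re (qtr X (op_mult X (ext_op Y X (ext_sop V Y (sop_adj V E) Z)) \<rho>)) \<and>
         Re (qtr X (op_mult X (ext_op Y X (ext_sop V Y (sop_adj V E) Z)) \<rho>)) \<le> Re (qtr X \<rho>)"
proof -
  have VX: "V \<subseteq> X" using VY YX by simp
  have s: "is_pos X (ext_sop V X E \<rho>)" by (rule dprog_cp[OF d fin VX p])
  have zx: "is_proj X (ext_op Y X Z)" by (rule ext_proj[OF fin YX z])
  have "Re (qtr X (ext_sop V X E \<rho>)) \<le> Re (qtr X \<rho>)" by (rule tn_ext[OF fin VX d p])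
  then show ?thesis using proj_tr_bounds[OF fin zx s] unfolding T_dual[OF fin VY YX d] by linarith
qed

lemma T_pos:
  assumes fin: "finite Y" and VY: "V \<subseteq> Y" and d: "is_dprog V E" and z: "is_proj Y Z"
  shows "is_pos Y (ext_sop V Y (sop_adj V E) Z)"
  unfolding is_pos_def
proof (intro conjI ballI)
  show "wf_op Y (ext_sop V Y (sop_adj V E) Z)" by (rule wf_ext_sop)
  fix x assume x: "x \<in> vecs Y"
  have "qform Y (ext_sop V Y (sop_adj V E) Z) x =
        qtr Y (op_mult Y (ext_op Y Y (ext_sop V Y (sop_adj V E) Z)) (rank1 x))"
    by (simp add: qform_rank1_tr ext_self wf_ext_sop)
  then show "Im (qform Y (ext_sop V Y (sop_adj V E) Z) x) = 0"
    "0 \<le> Re (qform Y (ext_sop V Y (sop_adj V E) Z) x)"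
    using T_bounds[OF fin VY order_refl d z rank1_pos[OF x]] by simp_all
qed

lemma qform_msub: "qform X (msub A B) x = qform X A x - qform X B x"
  unfolding qform_def msub_def by (simp add: algebra_simps sum_subtractf)

lemma T_le:
  assumes fin: "finite Y" and VY: "V \<subseteq> Y" and d: "is_dprog V E" and z: "is_proj Y Z"
  shows "is_pos Y (msub (id_op Y) (ext_sop V Y (sop_adj V E) Z))"
  unfolding is_pos_def
proof (intro conjI ballI)
  show "wf_op Y (msub (id_op Y) (ext_sop V Y (sop_adj V E) Z))" by (intro wf_msub wf_id wf_ext_sop)
  fix x assume x: "x \<in> vecs Y"
  have e: "qform Y (ext_sop V Y (sop_adj V E) Z) x =
        qtr Y (op_mult Y (ext_op Y Y (ext_sop V Y (sop_adj V E) Z)) (rank1 x))"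
    by (simp add: qform_rank1_tr ext_self wf_ext_sop)
  have b: "Im (qform Y (ext_sop V Y (sop_adj V E) Z) x) = 0"
     "Re (qform Y (ext_sop V Y (sop_adj V E) Z) x) \<le> Re (nrm2 Y x)"
    using T_bounds[OF fin VY order_refl d z rank1_pos[OF x]] unfolding e qtr_rank1 by simp_all
  show "Im (qform Y (msub (id_op Y) (ext_sop V Y (sop_adj V E) Z)) x) = 0"
    "0 \<le> Re (qform Y (msub (id_op Y) (ext_sop V Y (sop_adj V E) Z)) x)"
    unfolding qform_msub qform_id[OF fin x] using b nrm2_Re[of Y x] by simp_all
qed

lemma GL0:
  assumes fin: "finite X" and p: "is_proj X P" and wa: "wf_op X A"
    and ap: "op_mult X A P = mz" and pa: "op_mult X P A = mz"
  shows "qtr X (op_mult X A \<rho>) =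
         qtr X (op_mult X A (op_mult X (op_mult X (proj_perp X P) \<rho>) (proj_perp X P)))"
proof -
  have wp: "wf_op X P" using p unfolding is_proj_def by simp
  define P' where "P' = proj_perp X P"
  have s1: "op_mult X P' A = msub A mz"
    unfolding P'_def perp_msub op_mult_msub_left by (simp add: op_mult_id_left[OF fin wa] pa)
  have wam: "wf_op X (msub A mz)" using wa wf_mz by (rule wf_msub)
  have "op_mult X (op_mult X P' A) P' = msub (msub A mz) (msub mz mz)"
    unfolding s1 unfolding P'_def perp_msub op_mult_msub_right
    by (simp add: op_mult_id_right[OF fin wam] op_mult_id_right[OF fin wa] op_mult_msub_left ap op_mult_mz_left)
  also have "\<dots> = A" unfolding msub_def mz_def by simp
  finally have "op_mult X (op_mult X P' A) P' = A" .
  then have "qtr X (op_mult X A \<rho>) = qtr X (op_mult X (op_mult X (op_mult X P' A) P') \<rho>)" by simp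
  also have "\<dots> = qtr X (op_mult X P' (op_mult X A (op_mult X P' \<rho>)))"
    by (simp add: op_mult_assoc)
  also have "\<dots> = qtr X (op_mult X (op_mult X A (op_mult X P' \<rho>)) P')" by (rule qtr_cyclic)
  also have "\<dots> = qtr X (op_mult X A (op_mult X (op_mult X P' \<rho>) P'))" by (simp add: op_mult_assoc)
  finally show ?thesis unfolding P'_def .
qed

lemma PP'_zero:
  assumes fin: "finite X" and p: "is_proj X P"
  shows "op_mult X P (proj_perp X P) = mz"
proof -
  have wp: "wf_op X P" and m: "op_mult X P P = P" using p unfolding is_proj_def by auto
  show ?thesis unfolding perp_msub op_mult_msub_right
    by (simp add: op_mult_id_right[OF fin wp] m msub_def mz_def)
qed

lemma GL1:
  assumes fin: "finite X" and p: "is_proj X P" and wa: "wf_op X A"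
    and ap: "op_mult X A P = P" and pa: "op_mult X P A = P"
  shows "qtr X (op_mult X A \<rho>) = qtr X (op_mult X P \<rho>) +
         qtr X (op_mult X A (op_mult X (op_mult X (proj_perp X P) \<rho>) (proj_perp X P)))"
proof -
  have wp: "wf_op X P" and m: "op_mult X P P = P" using p unfolding is_proj_def by auto
  define B where "B = msub A P"
  have bp: "op_mult X B P = mz" unfolding B_def op_mult_msub_left using ap m by (simp add: msub_def mz_def)
  have pb: "op_mult X P B = mz" unfolding B_def op_mult_msub_right using pa m by (simp add: msub_def mz_def)
  have wb: "wf_op X B" unfolding B_def using wa wp by (rule wf_msub)
  have g: "qtr X (op_mult X B \<rho>) =
         qtr X (op_mult X B (op_mult X (op_mult X (proj_perp X P) \<rho>) (proj_perp X P)))"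
    by (rule GL0[OF fin p wb bp pb])
  have z: "qtr X (op_mult X P (op_mult X (op_mult X (proj_perp X P) \<rho>) (proj_perp X P))) = 0"
  proof -
    have "qtr X (op_mult X P (op_mult X (op_mult X (proj_perp X P) \<rho>) (proj_perp X P))) =
          qtr X (op_mult X (op_mult X P (proj_perp X P)) (op_mult X \<rho> (proj_perp X P)))"
      by (simp add: op_mult_assoc)
    then show ?thesis by (simp add: PP'_zero[OF fin p] op_mult_mz_left qtr_mz)
  qed
  have "qtr X (op_mult X A \<rho>) - qtr X (op_mult X P \<rho>) =
     qtr X (op_mult X A (op_mult X (op_mult X (proj_perp X P) \<rho>) (proj_perp X P)))"
    using g z unfolding B_def op_mult_msub_left qtr_msub by simp
  then show ?thesis by (simp add: diff_eq_eq add.commute)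
qed

lemma conj_perp_pos:
  assumes fin: "finite X" and p: "is_proj X P" and r: "is_pos X \<rho>"
  shows "is_pos X (op_mult X (op_mult X (proj_perp X P) \<rho>) (proj_perp X P))"
proof -
  have "is_proj X (proj_perp X P)" by (rule proj_perp_proj[OF fin p])
  then show ?thesis using pos_conj[OF r] unfolding is_proj_def by simp
qed

lemma conj_perp_tr:
  assumes fin: "finite X" and p: "is_proj X P" and wr: "wf_op X \<rho>"
  shows "qtr X (op_mult X (op_mult X (proj_perp X P) \<rho>) (proj_perp X P)) = qtr X \<rho> - qtr X (op_mult X P \<rho>)"
proof -
  have pp: "is_proj X (proj_perp X P)" by (rule proj_perp_proj[OF fin p])
  then have m: "op_mult X (proj_perp X P) (proj_perp X P) = proj_perp X P" unfolding is_proj_def by simp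
  have "qtr X (op_mult X (op_mult X (proj_perp X P) \<rho>) (proj_perp X P)) =
        qtr X (op_mult X (proj_perp X P) (op_mult X (proj_perp X P) \<rho>))" by (rule qtr_cyclic)
  also have "\<dots> = qtr X (op_mult X (proj_perp X P) \<rho>)" by (simp add: op_mult_assoc[symmetric] m)
  also have "\<dots> = qtr X \<rho> - qtr X (op_mult X P \<rho>)"
    unfolding perp_msub op_mult_msub_left qtr_msub by (simp add: op_mult_id_left[OF fin wr])
  finally show ?thesis .
qed

definition subsp :: "nat set \<Rightarrow> qvec set \<Rightarrow> bool" where
  "subsp X S \<longleftrightarrow> S \<subseteq> vecs X \<and> (\<lambda>_. 0) \<in> S \<and> (\<forall>x\<in>S. \<forall>y\<in>S. (\<lambda>s. x s + y s) \<in> S) \<and>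
     (\<forall>c. \<forall>x\<in>S. (\<lambda>s. c * x s) \<in> S)"

lemma subsp_lin:
  assumes S: "subsp X S" and x: "x \<in> S" and y: "y \<in> S"
  shows "(\<lambda>s. a * x s + b * y s) \<in> S"
proof -
  have ad: "\<forall>x\<in>S. \<forall>y\<in>S. (\<lambda>s. x s + y s) \<in> S" and sc: "\<forall>c. \<forall>x\<in>S. (\<lambda>s. c * x s) \<in> S"
    using S unfolding subsp_def by simp_all
  have "(\<lambda>s. a * x s) \<in> S" using sc x by simp
  moreover have "(\<lambda>s. b * y s) \<in> S" using sc y by simp
  ultimately have "(\<lambda>s. (\<lambda>s. a * x s) s + (\<lambda>s. b * y s) s) \<in> S" using ad by simp
  then show ?thesis by simp
qed

lemma proj_diag:
  assumes fin: "finite X" and p: "is_proj X P" and s: "s \<subseteq> X"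
  shows "Re (P s s) \<le> 1"
proof -
  have w: "wf_op X P" and m: "op_mult X P P = P" and h: "op_adj P = P" using p unfolding is_proj_def by auto
  have hc: "\<And>a b. P a b = cnj (P b a)"
  proof -
    fix a b have "op_adj P a b = P a b" using h by simp
    then show "P a b = cnj (P b a)" unfolding op_adj_def by simp
  qed
  have "op_mult X P P s s = P s s" using m by simp
  then have "P s s = (\<Sum>u\<in>Pow X. P s u * P u s)" unfolding op_mult_def by simp
  also have "\<dots> = nrm2 X (col P s)" unfolding nrm2_def col_def by (subst hc) (simp add: mult.commute)
  also have "\<dots> = of_real (\<Sum>u\<in>Pow X. (cmod (P u s))^2)" unfolding nrm2_real col_def ..
  finally have e: "P s s = of_real (\<Sum>u\<in>Pow X. (cmod (P u s))^2)" .
  define r where "r = (\<Sum>u\<in>Pow X. (cmod (P u s))^2)"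
  have e': "P s s = of_real r" using e by (simp only: r_def)
  have "(cmod (P s s))^2 \<le> r" unfolding r_def using s fin
    by (intro member_le_sum) auto
  moreover have "cmod (P s s) = \<bar>r\<bar>" by (simp only: e' norm_of_real)
  moreover have "r \<ge> 0" unfolding r_def by (simp add: sum_nonneg)
  ultimately have "r^2 \<le> r" by simp
  have "r \<le> 1"
  proof (rule ccontr)
    assume "\<not> r \<le> 1"
    then have "1 * r < r * r" using mult_strict_right_mono[of 1 r r] by simp
    then show False using \<open>r^2 \<le> r\<close> by (simp add: power2_eq_square)
  qed
  then show ?thesis using e' by simp
qed

lemma tr_proj_le:
  assumes fin: "finite X" and p: "is_proj X P"
  shows "Re (qtr X P) \<le> real (card (Pow X))"
proof -
  have "Re (qtr X P) = (\<Sum>s\<in>Pow X. Re (P s s))" unfolding qtr_def by (simp add: Re_sum)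
  also have "\<dots> \<le> (\<Sum>s\<in>Pow X. 1)" by (rule sum_mono) (auto intro: proj_diag[OF fin p])
  finally show ?thesis by simp
qed

lemma op_apply_lin: "op_apply X A (\<lambda>s. x s + c * y s) = (\<lambda>s. op_apply X A x s + c * op_apply X A y s)"
  unfolding op_apply_def by (rule ext) (simp add: distrib_left sum.distrib sum_distrib_left mult.left_commute)

lemma proj_step:
  assumes fin: "finite X" and p: "is_proj X P" and wv: "w \<in> vecs X" and pw: "op_apply X P w = (\<lambda>_. 0)"
    and wn: "w \<noteq> (\<lambda>_. 0)"
  shows "\<exists>P'. is_proj X P' \<and> Re (qtr X P') = Re (qtr X P) + 1 \<and>
     (\<forall>x\<in>vecs X. \<exists>c. op_apply X P' x = (\<lambda>s. op_apply X P x s + c * w s))"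
proof -
  have wp: "wf_op X P" and m: "op_mult X P P = P" and h: "op_adj P = P" using p unfolding is_proj_def by auto
  have hc: "\<And>a b. cnj (P a b) = P b a"
  proof -
    fix a b have "op_adj P b a = P b a" using h by simp
    then show "cnj (P a b) = P b a" unfolding op_adj_def by simp
  qed
  define n where "n = (\<Sum>s\<in>Pow X. (cmod (w s))^2)"
  have nw: "nrm2 X w = of_real n" unfolding n_def nrm2_real ..
  have n0: "n \<noteq> 0" using nrm2_zero[OF fin wv] wn nw by auto
  define c where "c = complex_of_real (1 / n)"
  define R where "R = msc c (rank1 w)"
  define P' where "P' = madd P R"
  have pr: "op_mult X P (rank1 w) = mz"
  proof (intro ext)
    fix s t
    have "op_mult X P (rank1 w) s t = op_apply X P w s * cnj (w t)"
      unfolding op_mult_def rank1_def op_apply_def by (simp add: sum_distrib_right mult.assoc)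
    then show "op_mult X P (rank1 w) s t = mz s t" using pw by (simp add: mz_def)
  qed
  have rp: "op_mult X (rank1 w) P = mz"
  proof (intro ext)
    fix s t
    have "op_mult X (rank1 w) P s t = w s * cnj (op_apply X P w t)"
      unfolding op_mult_def rank1_def op_apply_def by (simp add: sum_distrib_left mult_ac hc)
    then show "op_mult X (rank1 w) P s t = mz s t" using pw by (simp add: mz_def)
  qed
  have rr: "op_mult X (rank1 w) (rank1 w) = msc (nrm2 X w) (rank1 w)"
    unfolding op_mult_def rank1_def msc_def nrm2_def
    by (auto intro!: ext simp: sum_distrib_left sum_distrib_right mult_ac)
  have cc: "c * c * nrm2 X w = c" unfolding c_def nw using n0 by (simp add: field_simps)
  have wr: "wf_op X (rank1 w)" using wv unfolding wf_op_def vecs_def rank1_def by auto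
  have ccz: "\<And>z. c * (c * (nrm2 X w * z)) = c * z" by (simp add: mult.assoc[symmetric] cc)
  have "op_mult X P' P' = P'"
    unfolding P'_def R_def op_mult_madd_left op_mult_madd_right op_mult_msc_left op_mult_msc_right
    apply (simp only: m pr rp rr)
    apply (simp add: madd_def msc_def mz_def ccz)
    done
  moreover have "op_adj P' = P'"
    unfolding P'_def R_def adj_madd h by (rule arg_cong[where f = "madd P"]) (simp add: op_adj_def msc_def rank1_def c_def mult.commute)
  moreover have "wf_op X P'" unfolding P'_def R_def by (intro wf_madd wf_msc wp wr)
  ultimately have pp: "is_proj X P'" unfolding is_proj_def by simp
  have "qtr X P' = qtr X P + c * nrm2 X w" unfolding P'_def R_def qtr_madd qtr_msc qtr_rank1 ..
  also have "\<dots> = qtr X P + 1" unfolding c_def nw using n0 by simp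
  finally have tr: "Re (qtr X P') = Re (qtr X P) + 1" by simp
  have ap: "\<forall>x\<in>vecs X. \<exists>d. op_apply X P' x = (\<lambda>s. op_apply X P x s + d * w s)"
  proof
    fix x assume "x \<in> vecs X"
    have "op_apply X P' x = (\<lambda>s. op_apply X P x s + (c * (\<Sum>u\<in>Pow X. cnj (w u) * x u)) * w s)"
      unfolding P'_def R_def op_apply_def madd_def msc_def rank1_def
      by (auto intro!: ext simp: algebra_simps sum.distrib sum_distrib_left)
    then show "\<exists>d. op_apply X P' x = (\<lambda>s. op_apply X P x s + d * w s)" by blast
  qed
  show ?thesis using pp tr ap by blast
qed

lemma img_mz: "img X mz \<subseteq> {\<lambda>_. 0}"
  unfolding img_def op_apply_def mz_def by auto

lemma proj_mz: "is_proj X mz"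
  unfolding is_proj_def by (simp add: wf_mz op_mult_mz_left) (auto simp: op_adj_def mz_def)

lemma proj_exists:
  assumes fin: "finite X" and S: "subsp X S"
  shows "\<exists>P. is_proj X P \<and> img X P = S"
proof -
  have Sv: "S \<subseteq> vecs X" and S0: "(\<lambda>_. 0) \<in> S" using S unfolding subsp_def by auto
  have ind: "\<exists>P. is_proj X P \<and> img X P \<subseteq> S \<and> (img X P = S \<or> real k \<le> Re (qtr X P))" for k
  proof (induction k)
    case 0
    have "img X mz \<subseteq> S" using img_mz S0 by blast
    then show ?case using proj_mz[of X] by (intro exI[of _ mz]) (auto simp: qtr_mz)
  next
    case (Suc k)
    then obtain P where p: "is_proj X P" and iS: "img X P \<subseteq> S" and c: "img X P = S \<or> real k \<le> Re (qtr X P)"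
      by blast
    show ?case
    proof (cases "img X P = S")
      case True
      then show ?thesis using p by blast
    next
      case False
      then obtain x where xS: "x \<in> S" and xn: "x \<notin> img X P" using iS by blast
      have xv: "x \<in> vecs X" using xS Sv by blast
      have wp: "wf_op X P" and m: "op_mult X P P = P" using p unfolding is_proj_def by auto
      have px: "op_apply X P x \<noteq> x" using xn xv img_proj[OF fin p] by blast
      define w where "w = (\<lambda>s. 1 * x s + (-1) * op_apply X P x s)"
      have pxS: "op_apply X P x \<in> S" using iS xv unfolding img_def by blast
      have wS: "w \<in> S" unfolding w_def by (rule subsp_lin[OF S xS pxS])
      have wv: "w \<in> vecs X" using wS Sv by blast
      have pw: "op_apply X P w = (\<lambda>_. 0)"
      proof -
        have "op_apply X P w = (\<lambda>s. op_apply X P x s + (-1) * op_apply X P (op_apply X P x) s)"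
          unfolding w_def using op_apply_lin[of X P x "-1" "op_apply X P x"] by simp
        also have "\<dots> = (\<lambda>_. 0)" by (simp add: op_apply_mult[symmetric] m)
        finally show ?thesis .
      qed
      have wn: "w \<noteq> (\<lambda>_. 0)"
      proof
        assume "w = (\<lambda>_. 0)"
        then have "\<And>s. x s = op_apply X P x s" unfolding w_def by (metis (no_types) fun_cong right_minus_eq mult_1 mult_minus1 diff_conv_add_uminus)
        then show False using px by auto
      qed
      obtain P' where p': "is_proj X P'" and tr: "Re (qtr X P') = Re (qtr X P) + 1"
        and ap: "\<forall>y\<in>vecs X. \<exists>d. op_apply X P' y = (\<lambda>s. op_apply X P y s + d * w s)"
        using proj_step[OF fin p wv pw wn] by blast
      have "img X P' \<subseteq> S"
      proof
        fix z assume "z \<in> img X P'"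
        then obtain y where yv: "y \<in> vecs X" and z: "z = op_apply X P' y" unfolding img_def by blast
        obtain d where e: "op_apply X P' y = (\<lambda>s. op_apply X P y s + d * w s)" using ap yv by blast
        have "op_apply X P y \<in> S" using iS yv unfolding img_def by blast
        then have "(\<lambda>s. 1 * op_apply X P y s + d * w s) \<in> S" by (rule subsp_lin[OF S _ wS])
        then show "z \<in> S" using z e by simp
      qed
      moreover have "real (Suc k) \<le> Re (qtr X P')" using c False tr by auto
      ultimately show ?thesis using p' by blast
    qed
  qed
  obtain P where p: "is_proj X P" and c: "img X P = S \<or> real (Suc (card (Pow X))) \<le> Re (qtr X P)"
    using ind[of "Suc (card (Pow X))"] by blast
  have "Re (qtr X P) \<le> real (card (Pow X))" by (rule tr_proj_le[OF fin p])
  then have "img X P = S" using c by auto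
  then show ?thesis using p by blast
qed

lemma the_max:
  assumes fin: "finite X" and p0: "is_proj X P0" and f0: "F P0"
    and mx: "\<And>P. is_proj X P \<Longrightarrow> F P \<Longrightarrow> img X P \<subseteq> img X P0"
  shows "(THE P. is_proj X P \<and> F P \<and> (\<forall>P'. is_proj X P' \<and> F P' \<longrightarrow> proj_le X P' P)) = P0"
proof (rule the_equality)
  have "\<forall>P'. is_proj X P' \<and> F P' \<longrightarrow> proj_le X P' P0"
  proof (intro allI impI)
    fix P' assume "is_proj X P' \<and> F P'"
    then show "proj_le X P' P0" unfolding proj_le_def using mx by simp
  qed
  then show "is_proj X P0 \<and> F P0 \<and> (\<forall>P'. is_proj X P' \<and> F P' \<longrightarrow> proj_le X P' P0)"
    using p0 f0 by simp
next
  fix P assume a: "is_proj X P \<and> F P \<and> (\<forall>P'. is_proj X P' \<and> F P' \<longrightarrow> proj_le X P' P)"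
  then have pP: "is_proj X P" and fP: "F P" and mP: "\<forall>P'. is_proj X P' \<and> F P' \<longrightarrow> proj_le X P' P"
    by simp_all
  have "proj_le X P0 P" using mP[rule_format, OF conjI[OF p0 f0]] .
  then have "img X P0 \<subseteq> img X P" unfolding proj_le_def .
  moreover have "img X P \<subseteq> img X P0" by (rule mx[OF pP fP])
  ultimately show "P = P0" using proj_unique[OF fin pP p0] by (simp add: equalityI)
qed

lemma the_min:
  assumes fin: "finite X" and p0: "is_proj X P0" and f0: "F P0"
    and mn: "\<And>P. is_proj X P \<Longrightarrow> F P \<Longrightarrow> img X P0 \<subseteq> img X P"
  shows "(THE P. is_proj X P \<and> F P \<and> (\<forall>P'. is_proj X P' \<and> F P' \<longrightarrow> proj_le X P P')) = P0"
proof (rule the_equality)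
  have "\<forall>P'. is_proj X P' \<and> F P' \<longrightarrow> proj_le X P0 P'"
  proof (intro allI impI)
    fix P' assume "is_proj X P' \<and> F P'"
    then show "proj_le X P0 P'" unfolding proj_le_def using mn by simp
  qed
  then show "is_proj X P0 \<and> F P0 \<and> (\<forall>P'. is_proj X P' \<and> F P' \<longrightarrow> proj_le X P0 P')"
    using p0 f0 by simp
next
  fix P assume a: "is_proj X P \<and> F P \<and> (\<forall>P'. is_proj X P' \<and> F P' \<longrightarrow> proj_le X P P')"
  then have pP: "is_proj X P" and fP: "F P" and mP: "\<forall>P'. is_proj X P' \<and> F P' \<longrightarrow> proj_le X P P'"
    by simp_all
  have "proj_le X P P0" using mP[rule_format, OF conjI[OF p0 f0]] .
  then have "img X P \<subseteq> img X P0" unfolding proj_le_def .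
  moreover have "img X P0 \<subseteq> img X P" by (rule mn[OF pP fP])
  ultimately show "P = P0" using proj_unique[OF fin pP p0] by (simp add: equalityI)
qed

lemma nprog_ne: "is_nprog V EE \<Longrightarrow> EE \<noteq> {}"
  unfolding is_nprog_def by (drule conjunct1)
lemma nprog_dprog: "is_nprog V EE \<Longrightarrow> E \<in> EE \<Longrightarrow> is_dprog V E"
  unfolding is_nprog_def by (drule conjunct2, drule conjunct1) (auto)

lemma Re_ofreal_mult: "Re (complex_of_real r * z) = r * Re z"
  by simp

lemma qform_msc: "qform X (msc c A) x = c * qform X A x"
  unfolding qform_def msc_def by (simp add: sum_distrib_left mult_ac)

lemma pos_msc:
  assumes p: "is_pos X A" and r: "0 \<le> r"
  shows "is_pos X (msc (complex_of_real r) A)"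
  using p r unfolding is_pos_def by (simp add: qform_msc wf_msc)

lemma qtr_nonneg_proj:
  assumes fin: "finite X" and p: "is_proj X P"
  shows "0 \<le> Re (qtr X P)"
proof -
  have w: "wf_op X P" using p unfolding is_proj_def by simp
  have "qtr X P = qtr X (op_mult X (id_op X) P)" by (simp add: op_mult_id_left[OF fin w])
  then show ?thesis using tr_pos[OF fin id_pos[OF fin] p] by simp
qed

lemma norm_rho:
  assumes fin: "finite X" and p: "is_proj X P" and c: "c = Re (qtr X P) + 1"
  shows "pdens X (msc (complex_of_real (1 / c)) P) \<and> c > 0 \<and>
         Re (qtr X (msc (complex_of_real (1 / c)) P)) = Re (qtr X P) / c"
proof -
  have t0: "0 \<le> Re (qtr X P)" by (rule qtr_nonneg_proj[OF fin p])
  then have c0: "c > 0" using c by simp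
  have e: "Re (qtr X (msc (complex_of_real (1 / c)) P)) = Re (qtr X P) / c"
    unfolding qtr_msc Re_ofreal_mult by simp
  have "Re (qtr X P) / c \<le> 1" using c0 c by (simp add: divide_le_eq_1)
  moreover have "is_pos X (msc (complex_of_real (1 / c)) P)"
    using pos_msc[OF proj_pos[OF fin p], of "1 / c"] c0 by simp
  ultimately show ?thesis unfolding pdens_def using e c0 by simp
qed

lemma qtr_perp_mult:
  assumes fin: "finite X" and w: "wf_op X \<sigma>"
  shows "qtr X (op_mult X (msub (id_op X) A) \<sigma>) = qtr X \<sigma> - qtr X (op_mult X A \<sigma>)"
  unfolding op_mult_msub_left qtr_msub by (simp add: op_mult_id_left[OF fin w])

lemma ext_sop_msc:
  assumes d: "is_dprog V E"
  shows "ext_sop V X E (msc c \<rho>) = msc c (ext_sop V X E \<rho>)"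
proof (intro ext)
  fix s t
  have e: "(\<lambda>u v. if u \<subseteq> V \<and> v \<subseteq> V then msc c \<rho> (u \<union> (s - V)) (v \<union> (t - V)) else 0) =
      msc c (\<lambda>u v. if u \<subseteq> V \<and> v \<subseteq> V then \<rho> (u \<union> (s - V)) (v \<union> (t - V)) else 0)"
    unfolding msc_def by (intro ext) simp
  show "ext_sop V X E (msc c \<rho>) s t = msc c (ext_sop V X E \<rho>) s t"
    unfolding ext_sop_def by (simp only: e dprog_sc[OF d]) (simp add: msc_def)
qed

lemma op_apply_sc: "op_apply X A (\<lambda>s. c * x s) = (\<lambda>s. c * op_apply X A x s)"
  unfolding op_apply_def by (simp add: sum_distrib_left mult_ac)

lemma eig1_subsp: "subsp X (eig1 X A)"
  unfolding subsp_def eig1_def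
proof (intro conjI ballI allI)
  show "{x \<in> vecs X. op_apply X A x = x} \<subseteq> vecs X" by auto
  show "(\<lambda>_. 0) \<in> {x \<in> vecs X. op_apply X A x = x}" unfolding vecs_def op_apply_def by auto
  fix x y c assume x: "x \<in> {x \<in> vecs X. op_apply X A x = x}"
  show "(\<lambda>s. c * x s) \<in> {x \<in> vecs X. op_apply X A x = x}"
    using x unfolding vecs_def by (simp add: op_apply_sc)
  assume y: "y \<in> {x \<in> vecs X. op_apply X A x = x}"
  have "op_apply X A (\<lambda>s. x s + 1 * y s) = (\<lambda>s. x s + 1 * y s)"
    using x y by (simp only: op_apply_lin) simp
  then show "(\<lambda>s. x s + y s) \<in> {x \<in> vecs X. op_apply X A x = x}"
    using x y unfolding vecs_def by simp
qed

lemma ker_subsp: "subsp X {x \<in> vecs X. op_apply X A x = (\<lambda>_. 0)}"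
  unfolding subsp_def
proof (intro conjI ballI allI)
  show "{x \<in> vecs X. op_apply X A x = (\<lambda>_. 0)} \<subseteq> vecs X" by auto
  show "(\<lambda>_. 0) \<in> {x \<in> vecs X. op_apply X A x = (\<lambda>_. 0)}" unfolding vecs_def op_apply_def by auto
  fix x y c assume x: "x \<in> {x \<in> vecs X. op_apply X A x = (\<lambda>_. 0)}"
  show "(\<lambda>s. c * x s) \<in> {x \<in> vecs X. op_apply X A x = (\<lambda>_. 0)}"
  proof -
    have "op_apply X A (\<lambda>s. c * x s) = (\<lambda>s. c * op_apply X A x s)" by (rule op_apply_sc)
    then show ?thesis using x unfolding vecs_def by simp
  qed
  assume y: "y \<in> {x \<in> vecs X. op_apply X A x = (\<lambda>_. 0)}"
  have "op_apply X A (\<lambda>s. x s + 1 * y s) = (\<lambda>_. 0)"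
    using x y by (simp only: op_apply_lin) simp
  then show "(\<lambda>s. x s + y s) \<in> {x \<in> vecs X. op_apply X A x = (\<lambda>_. 0)}"
    using x y unfolding vecs_def by simp
qed

lemma nullq_eq:
  assumes fin: "finite X" and p: "is_pos X B"
  shows "nullq X B = {x \<in> vecs X. op_apply X B x = (\<lambda>_. 0)}"
proof
  show "nullq X B \<subseteq> {x \<in> vecs X. op_apply X B x = (\<lambda>_. 0)}"
    unfolding nullq_def using kill[OF fin p] by auto
  show "{x \<in> vecs X. op_apply X B x = (\<lambda>_. 0)} \<subseteq> nullq X B"
    unfolding nullq_def by (auto simp: qform_apply)
qed

lemma subsp_INT:
  assumes ne: "I \<noteq> {}" and s: "\<And>i. i \<in> I \<Longrightarrow> subsp X (f i)"
  shows "subsp X (\<Inter>i\<in>I. f i)"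
proof -
  obtain i0 where i0: "i0 \<in> I" using ne by blast
  have "(\<Inter>i\<in>I. f i) \<subseteq> f i0" using i0 by (rule INT_lower)
  also have "f i0 \<subseteq> vecs X" using s[OF i0] unfolding subsp_def by simp
  finally have a1: "(\<Inter>i\<in>I. f i) \<subseteq> vecs X" .
  have a2: "(\<lambda>_. 0) \<in> (\<Inter>i\<in>I. f i)"
  proof (rule INT_I)
    fix i assume "i \<in> I" then show "(\<lambda>_. 0) \<in> f i" using s unfolding subsp_def by simp
  qed
  have a3: "\<forall>x\<in>(\<Inter>i\<in>I. f i). \<forall>y\<in>(\<Inter>i\<in>I. f i). (\<lambda>s. x s + y s) \<in> (\<Inter>i\<in>I. f i)"
  proof (intro ballI INT_I)
    fix x y i assume x: "x \<in> (\<Inter>i\<in>I. f i)" and y: "y \<in> (\<Inter>i\<in>I. f i)" and i: "i \<in> I"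
    have "x \<in> f i" "y \<in> f i" using INT_D[OF x i] INT_D[OF y i] by simp_all
    then have "(\<lambda>s. 1 * x s + 1 * y s) \<in> f i" by (rule subsp_lin[OF s[OF i]])
    then show "(\<lambda>s. x s + y s) \<in> f i" by simp
  qed
  have a4: "\<forall>c. \<forall>x\<in>(\<Inter>i\<in>I. f i). (\<lambda>s. c * x s) \<in> (\<Inter>i\<in>I. f i)"
  proof (intro allI ballI INT_I)
    fix c x i assume x: "x \<in> (\<Inter>i\<in>I. f i)" and i: "i \<in> I"
    have "x \<in> f i" using INT_D[OF x i] by simp
    then have "(\<lambda>s. c * x s + 0 * x s) \<in> f i" using subsp_lin[OF s[OF i]] by blast
    then show "(\<lambda>s. c * x s) \<in> f i" by simp
  qed
  show ?thesis unfolding subsp_def using a1 a2 a3 a4 by (intro conjI) assumption+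
qed

lemma cspan_step:
  assumes z: "z \<in> cspan U" and u: "u \<in> U"
  shows "(\<lambda>s. z s + a * u s) \<in> cspan U"
proof -
  obtain n :: nat and c v where zd: "z = (\<lambda>s. \<Sum>i<n. c i * v i s)" and vU: "\<forall>i<n. v i \<in> U"
    using z unfolding cspan_def by blast
  define c' where "c' = c(n := a)"
  define v' where "v' = v(n := u)"
  have "(\<lambda>s. z s + a * u s) = (\<lambda>s. \<Sum>i<Suc n. c' i * v' i s)"
    unfolding zd c'_def v'_def by (auto intro!: ext sum.cong)
  moreover have "\<forall>i<Suc n. v' i \<in> U" using vU u unfolding v'_def by (auto simp: less_Suc_eq)
  ultimately show ?thesis unfolding cspan_def by blast
qed

lemma cspan_zero: "(\<lambda>_. 0) \<in> cspan U"
  unfolding cspan_def by (rule CollectI) (rule exI[of _ "0::nat"], auto)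

lemma cspan_in: "u \<in> U \<Longrightarrow> u \<in> cspan U"
  using cspan_step[OF cspan_zero, of u U 1] by simp

lemma cspan_add:
  assumes x: "x \<in> cspan U" and y: "y \<in> cspan U"
  shows "(\<lambda>s. x s + y s) \<in> cspan U"
proof -
  obtain n :: nat and c v where yd: "y = (\<lambda>s. \<Sum>i<n. c i * v i s)" and vU: "\<forall>i<n. v i \<in> U"
    using y unfolding cspan_def by blast
  have "\<forall>m\<le>n. (\<lambda>s. x s + (\<Sum>i<m. c i * v i s)) \<in> cspan U"
  proof (intro allI impI)
    fix m show "m \<le> n \<Longrightarrow> (\<lambda>s. x s + (\<Sum>i<m. c i * v i s)) \<in> cspan U"
    proof (induction m)
      case 0 then show ?case using x by simp
    next
      case (Suc m)
      then have "(\<lambda>s. x s + (\<Sum>i<m. c i * v i s)) \<in> cspan U" by simp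
      moreover have "v m \<in> U" using vU Suc by simp
      ultimately have "(\<lambda>s. (\<lambda>s. x s + (\<Sum>i<m. c i * v i s)) s + c m * v m s) \<in> cspan U"
        by (rule cspan_step)
      then show ?case by (simp add: add.assoc)
    qed
  qed
  then show ?thesis unfolding yd by simp
qed

lemma cspan_sc:
  assumes x: "x \<in> cspan U"
  shows "(\<lambda>s. a * x s) \<in> cspan U"
proof -
  obtain n :: nat and c v where xd: "x = (\<lambda>s. \<Sum>i<n. c i * v i s)" and vU: "\<forall>i<n. v i \<in> U"
    using x unfolding cspan_def by blast
  have "(\<lambda>s. a * x s) = (\<lambda>s. \<Sum>i<n. (\<lambda>i. a * c i) i * v i s)"
    unfolding xd by (simp add: sum_distrib_left mult.assoc)
  then show ?thesis using vU unfolding cspan_def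
    by (intro CollectI) (rule exI[of _ n], rule exI[of _ "\<lambda>i. a * c i"], rule exI[of _ v], simp)
qed

lemma cspan_vecs:
  assumes U: "U \<subseteq> vecs X"
  shows "cspan U \<subseteq> vecs X"
proof
  fix x assume "x \<in> cspan U"
  then obtain n :: nat and c v where xd: "x = (\<lambda>s. \<Sum>i<n. c i * v i s)" and vU: "\<forall>i<n. v i \<in> U"
    unfolding cspan_def by blast
  have "\<And>s. \<not> s \<subseteq> X \<Longrightarrow> x s = 0"
  proof -
    fix s assume s: "\<not> s \<subseteq> X"
    have "\<And>i. i < n \<Longrightarrow> v i s = 0" using vU U s unfolding vecs_def by blast
    then show "x s = 0" unfolding xd by simp
  qed
  then show "x \<in> vecs X" unfolding vecs_def by simp
qed

lemma cspan_subsp: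
  assumes U: "U \<subseteq> vecs X"
  shows "subsp X (cspan U)"
  unfolding subsp_def
proof (intro conjI ballI allI)
  show "cspan U \<subseteq> vecs X" by (rule cspan_vecs[OF U])
  show "(\<lambda>_. 0) \<in> cspan U" by (rule cspan_zero)
  fix x y c assume x: "x \<in> cspan U"
  show "(\<lambda>s. c * x s) \<in> cspan U" by (rule cspan_sc[OF x])
  assume y: "y \<in> cspan U"
  show "(\<lambda>s. x s + y s) \<in> cspan U" by (rule cspan_add[OF x y])
qed

lemma cspan_min:
  assumes S: "subsp X S" and U: "U \<subseteq> S"
  shows "cspan U \<subseteq> S"
proof
  fix x assume "x \<in> cspan U"
  then obtain n :: nat and c v where xd: "x = (\<lambda>s. \<Sum>i<n. c i * v i s)" and vU: "\<forall>i<n. v i \<in> U"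
    unfolding cspan_def by blast
  have "\<forall>m\<le>n. (\<lambda>s. \<Sum>i<m. c i * v i s) \<in> S"
  proof (intro allI impI)
    fix m show "m \<le> n \<Longrightarrow> (\<lambda>s. \<Sum>i<m. c i * v i s) \<in> S"
    proof (induction m)
      case 0 then show ?case using S unfolding subsp_def by simp
    next
      case (Suc m)
      then have a: "(\<lambda>s. \<Sum>i<m. c i * v i s) \<in> S" by simp
      have "v m \<in> S" using vU Suc U by auto
      then have "(\<lambda>s. 1 * (\<lambda>s. \<Sum>i<m. c i * v i s) s + c m * v m s) \<in> S" by (rule subsp_lin[OF S a])
      then show ?case by simp
    qed
  qed
  then show "x \<in> S" unfolding xd by simp
qed

lemma img_subsp:
  assumes fin: "finite X" and p: "is_proj X P"
  shows "subsp X (img X P)"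
  unfolding img_proj[OF fin p] using eig1_subsp[of X P] unfolding eig1_def .

lemma wp_part:
  assumes finV: "finite V" and np: "is_nprog V EE" and finW: "finite W" and pQ: "is_proj W Q"
  shows "img (V \<union> W) (wp_a V W EE Q) =
    (\<Inter>E\<in>EE. eig1 (V \<union> W) (ext_sop V (V \<union> W) (sop_adj V E) (ext_op W (V \<union> W) Q)))"
proof -
  define Y where "Y = V \<union> W"
  have finY: "finite Y" and VY: "V \<subseteq> Y" and WY: "W \<subseteq> Y" using finV finW unfolding Y_def by auto
  define Qt where "Qt = ext_op W Y Q"
  have pQt: "is_proj Y Qt" unfolding Qt_def by (rule ext_proj[OF finY WY pQ])
  define T where "T = (\<lambda>E. ext_sop V Y (sop_adj V E) Qt)"
  have ne: "EE \<noteq> {}" by (rule nprog_ne[OF np])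
  have dp: "\<And>E. E \<in> EE \<Longrightarrow> is_dprog V E" by (rule nprog_dprog[OF np])
  have Tpos: "\<And>E. E \<in> EE \<Longrightarrow> is_pos Y (T E)" unfolding T_def by (rule T_pos[OF finY VY dp pQt])
  have Tle: "\<And>E. E \<in> EE \<Longrightarrow> is_pos Y (msub (id_op Y) (T E))" unfolding T_def by (rule T_le[OF finY VY dp pQt])
  have Twf: "\<And>E. wf_op Y (T E)" unfolding T_def by (rule wf_ext_sop)
  have Therm: "\<And>E. E \<in> EE \<Longrightarrow> op_adj (T E) = T E" by (rule pos_herm[OF finY Tpos])
  have dual: "\<And>E X \<rho>. E \<in> EE \<Longrightarrow> finite X \<Longrightarrow> Y \<subseteq> X \<Longrightarrow>
     qtr X (op_mult X (ext_op Y X Qt) (ext_sop V X E \<rho>)) = qtr X (op_mult X (ext_op Y X (T E)) \<rho>)"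
    unfolding T_def by (rule T_dual[OF _ VY _ dp])
  define S where "S = (\<Inter>E\<in>EE. eig1 Y (T E))"
  have Ssub: "subsp Y S" unfolding S_def by (rule subsp_INT[OF ne eig1_subsp])
  obtain P0 where p0: "is_proj Y P0" and iP0: "img Y P0 = S" using proj_exists[OF finY Ssub] by blast
  have nec: "\<And>P. is_proj Y P \<Longrightarrow> sat_tot V W EE P Qt \<Longrightarrow> img Y P \<subseteq> img Y P0"
  proof -
    fix P assume p: "is_proj Y P" and st: "sat_tot V W EE P Qt"
    have wP: "wf_op Y P" and mP: "op_mult Y P P = P" using p unfolding is_proj_def by auto
    define c where "c = Re (qtr Y P) + 1"
    define \<rho> where "\<rho> = msc (complex_of_real (1 / c)) P"
    have nr: "pdens Y \<rho> \<and> c > 0 \<and> Re (qtr Y \<rho>) = Re (qtr Y P) / c"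
      unfolding \<rho>_def by (rule norm_rho[OF finY p c_def])
    then have pd: "pdens Y \<rho>" and c0: "c > 0" by auto
    have rp: "is_pos Y \<rho>" using pd unfolding pdens_def by simp
    have sat: "Re (qtr Y (op_mult Y (ext_op Y Y P) \<rho>)) \<le>
        (INF E\<in>EE. Re (qtr Y (op_mult Y (ext_op Y Y Qt) (ext_sop V Y E \<rho>))))"
      using st finY pd unfolding sat_tot_def Y_def[symmetric] by blast
    have lhs: "Re (qtr Y (op_mult Y (ext_op Y Y P) \<rho>)) = Re (qtr Y P) / c"
      unfolding ext_self[OF wP] \<rho>_def op_mult_msc_right mP qtr_msc Re_ofreal_mult by simp
    have bdd: "bdd_below ((\<lambda>E. Re (qtr Y (op_mult Y (ext_op Y Y Qt) (ext_sop V Y E \<rho>)))) ` EE)"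
    proof (rule bdd_belowI2[where m = 0])
      fix E assume E: "E \<in> EE"
      have "is_pos Y (ext_sop V Y E \<rho>)" by (rule dprog_cp[OF dp[OF E] finY VY rp])
      then show "0 \<le> Re (qtr Y (op_mult Y (ext_op Y Y Qt) (ext_sop V Y E \<rho>)))"
        using proj_tr_bounds[OF finY ext_proj[OF finY order_refl pQt]] by blast
    qed
    show "img Y P \<subseteq> img Y P0"
    proof
      fix x assume x: "x \<in> img Y P"
      show "x \<in> img Y P0"
        unfolding iP0 S_def
      proof (rule INT_I)
        fix E assume E: "E \<in> EE"
        have "Re (qtr Y (op_mult Y (ext_op Y Y P) \<rho>)) \<le> Re (qtr Y (op_mult Y (ext_op Y Y Qt) (ext_sop V Y E \<rho>)))"
          using sat cINF_lower[OF bdd E] by linarith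
        also have "\<dots> = Re (qtr Y (op_mult Y (T E) P)) / c"
          unfolding dual[OF E finY order_refl] ext_self[OF Twf] \<rho>_def op_mult_msc_right qtr_msc Re_ofreal_mult
          by simp
        finally have "Re (qtr Y P) / c \<le> Re (qtr Y (op_mult Y (T E) P)) / c" unfolding lhs .
        then have le: "Re (qtr Y P) \<le> Re (qtr Y (op_mult Y (T E) P))" using c0 by (simp add: divide_le_cancel)
        have "Re (qtr Y (op_mult Y (msub (id_op Y) (T E)) P)) \<le> 0"
          using le unfolding qtr_perp_mult[OF finY wP] by simp
        then have z: "op_mult Y (msub (id_op Y) (T E)) P = mz" by (rule K_lemma[OF finY Tle[OF E] p])
        have tp: "op_mult Y (T E) P = P"
        proof (intro ext)
          fix s t
          have "op_mult Y (msub (id_op Y) (T E)) P s t = 0" using z by (simp add: mz_def)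
          then show "op_mult Y (T E) P s t = P s t"
            unfolding op_mult_msub_left op_mult_id_left[OF finY wP] by (simp add: msub_def)
        qed
        obtain y where yv: "y \<in> vecs Y" and xy: "x = op_apply Y P y" using x unfolding img_def by blast
        have "op_apply Y (T E) x = x" unfolding xy op_apply_mult[symmetric] tp ..
        moreover have "x \<in> vecs Y" unfolding xy by (rule op_apply_vecs[OF wP])
        ultimately show "x \<in> eig1 Y (T E)" unfolding eig1_def by simp
      qed
    qed
  qed
  have suf: "sat_tot V W EE P0 Qt"
    unfolding sat_tot_def Y_def[symmetric]
  proof (intro allI impI)
    fix X \<rho> assume a: "finite X \<and> Y \<subseteq> X \<and> pdens X \<rho>"
    then have finX: "finite X" and YX: "Y \<subseteq> X" and rp: "is_pos X \<rho>" unfolding pdens_def by auto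
    have wr: "wf_op X \<rho>" using rp unfolding is_pos_def by simp
    have wP0: "wf_op Y P0" and hP0: "op_adj P0 = P0" using p0 unfolding is_proj_def by auto
    show "Re (qtr X (op_mult X (ext_op Y X P0) \<rho>)) \<le>
          (INF E\<in>EE. Re (qtr X (op_mult X (ext_op Y X Qt) (ext_sop V X E \<rho>))))"
    proof (rule cINF_greatest[OF ne])
      fix E assume E: "E \<in> EE"
      have fix0: "\<forall>x\<in>img Y P0. op_apply Y (T E) x = x" using E unfolding iP0 S_def eig1_def by blast
      have tp: "op_mult Y (T E) P0 = P0" by (rule mult_fix[OF finY wP0 fix0])
      have pt: "op_mult Y P0 (T E) = P0"
      proof -
        have "op_mult Y P0 (T E) = op_adj (op_mult Y (T E) P0)"
          by (simp add: op_adj_mult hP0 Therm[OF E])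
        then show ?thesis using tp hP0 by simp
      qed
      have pX: "is_proj X (ext_op Y X P0)" by (rule ext_proj[OF finX YX p0])
      have ap: "op_mult X (ext_op Y X (T E)) (ext_op Y X P0) = ext_op Y X P0"
        unfolding ext_mult[OF finX YX] tp ..
      have pa: "op_mult X (ext_op Y X P0) (ext_op Y X (T E)) = ext_op Y X P0"
        unfolding ext_mult[OF finX YX] pt ..
      have g: "qtr X (op_mult X (ext_op Y X (T E)) \<rho>) = qtr X (op_mult X (ext_op Y X P0) \<rho>) +
         qtr X (op_mult X (ext_op Y X (T E)) (op_mult X (op_mult X (proj_perp X (ext_op Y X P0)) \<rho>) (proj_perp X (ext_op Y X P0))))"
        by (rule GL1[OF finX pX ext_wf ap pa])
      have r2: "is_pos X (op_mult X (op_mult X (proj_perp X (ext_op Y X P0)) \<rho>) (proj_perp X (ext_op Y X P0)))"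
        by (rule conj_perp_pos[OF finX pX rp])
      have "0 \<le> Re (qtr X (op_mult X (ext_op Y X (T E)) (op_mult X (op_mult X (proj_perp X (ext_op Y X P0)) \<rho>) (proj_perp X (ext_op Y X P0)))))"
        using T_bounds[OF finX VY YX dp[OF E] pQt r2] unfolding T_def by simp
      then show "Re (qtr X (op_mult X (ext_op Y X P0) \<rho>)) \<le> Re (qtr X (op_mult X (ext_op Y X Qt) (ext_sop V X E \<rho>)))"
        unfolding dual[OF E finX YX] g by simp
    qed
  qed
  have "wp_a V W EE Q = P0"
    unfolding wp_a_def Y_def[symmetric] Qt_def[symmetric]
    by (rule the_max[OF finY p0, where F = "\<lambda>P. sat_tot V W EE P Qt", OF suf nec])
  then show ?thesis using iP0 unfolding S_def T_def Qt_def Y_def by simp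
qed

lemma op_apply_mz: "op_apply X mz x = (\<lambda>_. 0)"
  unfolding op_apply_def mz_def by simp

lemma adj_mz: "op_adj mz = mz"
  unfolding op_adj_def mz_def by simp

lemma wlp_part:
  assumes finV: "finite V" and np: "is_nprog V EE" and finW: "finite W" and pQ: "is_proj W Q"
  shows "img (V \<union> W) (wlp_a V W EE Q) =
    (\<Inter>E\<in>EE. nullq (V \<union> W) (ext_sop V (V \<union> W) (sop_adj V E) (ext_op W (V \<union> W) (proj_perp W Q))))"
proof -
  define Y where "Y = V \<union> W"
  have finY: "finite Y" and VY: "V \<subseteq> Y" and WY: "W \<subseteq> Y" using finV finW unfolding Y_def by auto
  define Qt where "Qt = ext_op W Y Q"
  define Z where "Z = ext_op W Y (proj_perp W Q)"
  have pZ: "is_proj Y Z" unfolding Z_def by (rule ext_proj[OF finY WY proj_perp_proj[OF finW pQ]])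
  define T where "T = (\<lambda>E. ext_sop V Y (sop_adj V E) Z)"
  have ne: "EE \<noteq> {}" by (rule nprog_ne[OF np])
  have dp: "\<And>E. E \<in> EE \<Longrightarrow> is_dprog V E" by (rule nprog_dprog[OF np])
  have Tpos: "\<And>E. E \<in> EE \<Longrightarrow> is_pos Y (T E)" unfolding T_def by (rule T_pos[OF finY VY dp pZ])
  have Twf: "\<And>E. wf_op Y (T E)" unfolding T_def by (rule wf_ext_sop)
  have Therm: "\<And>E. E \<in> EE \<Longrightarrow> op_adj (T E) = T E" by (rule pos_herm[OF finY Tpos])
  have ZX: "\<And>X. Y \<subseteq> X \<Longrightarrow> ext_op Y X Z = msub (id_op X) (ext_op Y X Qt)"
  proof -
    fix X assume YX: "Y \<subseteq> X"
    have WX: "W \<subseteq> X" using WY YX by simp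
    have "ext_op Y X Z = proj_perp X (ext_op W X Q)" unfolding Z_def ext_comp[OF WY YX] ext_perp[OF WX] ..
    then show "ext_op Y X Z = msub (id_op X) (ext_op Y X Qt)"
      unfolding Qt_def ext_comp[OF WY YX] perp_msub .
  qed
  have key: "\<And>E X \<rho>. E \<in> EE \<Longrightarrow> finite X \<Longrightarrow> Y \<subseteq> X \<Longrightarrow>
     Re (qtr X (op_mult X (ext_op Y X Qt) (ext_sop V X E \<rho>))) + Re (qtr X \<rho>) - Re (qtr X (ext_sop V X E \<rho>)) =
     Re (qtr X \<rho>) - Re (qtr X (op_mult X (ext_op Y X (T E)) \<rho>))"
  proof -
    fix E X \<rho> assume E: "E \<in> EE" and finX: "finite X" and YX: "Y \<subseteq> X"
    have "qtr X (op_mult X (ext_op Y X (T E)) \<rho>) = qtr X (op_mult X (ext_op Y X Z) (ext_sop V X E \<rho>))"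
      unfolding T_def by (rule T_dual[OF finX VY YX dp[OF E], symmetric])
    also have "\<dots> = qtr X (ext_sop V X E \<rho>) - qtr X (op_mult X (ext_op Y X Qt) (ext_sop V X E \<rho>))"
      unfolding ZX[OF YX] by (rule qtr_perp_mult[OF finX wf_ext_sop])
    finally show "Re (qtr X (op_mult X (ext_op Y X Qt) (ext_sop V X E \<rho>))) + Re (qtr X \<rho>) - Re (qtr X (ext_sop V X E \<rho>)) =
     Re (qtr X \<rho>) - Re (qtr X (op_mult X (ext_op Y X (T E)) \<rho>))" by simp
  qed
  define S where "S = (\<Inter>E\<in>EE. nullq Y (T E))"
  have Ssub: "subsp Y S" unfolding S_def
    by (rule subsp_INT[OF ne]) (simp add: nullq_eq[OF finY Tpos] ker_subsp)
  obtain P0 where p0: "is_proj Y P0" and iP0: "img Y P0 = S" using proj_exists[OF finY Ssub] by blast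
  have nec: "\<And>P. is_proj Y P \<Longrightarrow> sat_par V W EE P Qt \<Longrightarrow> img Y P \<subseteq> img Y P0"
  proof -
    fix P assume p: "is_proj Y P" and st: "sat_par V W EE P Qt"
    have wP: "wf_op Y P" and mP: "op_mult Y P P = P" using p unfolding is_proj_def by auto
    define c where "c = Re (qtr Y P) + 1"
    define \<rho> where "\<rho> = msc (complex_of_real (1 / c)) P"
    have nr: "pdens Y \<rho> \<and> c > 0 \<and> Re (qtr Y \<rho>) = Re (qtr Y P) / c"
      unfolding \<rho>_def by (rule norm_rho[OF finY p c_def])
    then have pd: "pdens Y \<rho>" and c0: "c > 0" and trr: "Re (qtr Y \<rho>) = Re (qtr Y P) / c" by auto
    have rp: "is_pos Y \<rho>" using pd unfolding pdens_def by simp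
    have sat: "Re (qtr Y (op_mult Y (ext_op Y Y P) \<rho>)) \<le>
        (INF E\<in>EE. Re (qtr Y (op_mult Y (ext_op Y Y Qt) (ext_sop V Y E \<rho>))) + Re (qtr Y \<rho>) - Re (qtr Y (ext_sop V Y E \<rho>)))"
      using st finY pd unfolding sat_par_def Y_def[symmetric] by blast
    have lhs: "Re (qtr Y (op_mult Y (ext_op Y Y P) \<rho>)) = Re (qtr Y P) / c"
      unfolding ext_self[OF wP] \<rho>_def op_mult_msc_right mP qtr_msc Re_ofreal_mult by simp
    have bdd: "bdd_below ((\<lambda>E. Re (qtr Y (op_mult Y (ext_op Y Y Qt) (ext_sop V Y E \<rho>))) + Re (qtr Y \<rho>) - Re (qtr Y (ext_sop V Y E \<rho>))) ` EE)"
    proof (rule bdd_belowI2[where m = 0])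
      fix E assume E: "E \<in> EE"
      have "Re (qtr Y (op_mult Y (ext_op Y Y (T E)) \<rho>)) \<le> Re (qtr Y \<rho>)"
        using T_bounds[OF finY VY order_refl dp[OF E] pZ rp] unfolding T_def by simp
      then show "0 \<le> Re (qtr Y (op_mult Y (ext_op Y Y Qt) (ext_sop V Y E \<rho>))) + Re (qtr Y \<rho>) - Re (qtr Y (ext_sop V Y E \<rho>))"
        unfolding key[OF E finY order_refl] by simp
    qed
    show "img Y P \<subseteq> img Y P0"
    proof
      fix x assume x: "x \<in> img Y P"
      show "x \<in> img Y P0"
        unfolding iP0 S_def
      proof (rule INT_I)
        fix E assume E: "E \<in> EE"
        have "Re (qtr Y (op_mult Y (ext_op Y Y P) \<rho>)) \<le>
           Re (qtr Y (op_mult Y (ext_op Y Y Qt) (ext_sop V Y E \<rho>))) + Re (qtr Y \<rho>) - Re (qtr Y (ext_sop V Y E \<rho>))"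
          using sat cINF_lower[OF bdd E] by linarith
        also have "\<dots> = Re (qtr Y \<rho>) - Re (qtr Y (op_mult Y (ext_op Y Y (T E)) \<rho>))"
          by (rule key[OF E finY order_refl])
        also have "\<dots> = Re (qtr Y P) / c - Re (qtr Y (op_mult Y (T E) P)) / c"
        proof -
          have "Re (qtr Y (op_mult Y (T E) \<rho>)) = Re (qtr Y (op_mult Y (T E) P)) / c"
            unfolding \<rho>_def op_mult_msc_right qtr_msc Re_ofreal_mult by simp
          then show ?thesis unfolding ext_self[OF Twf] trr by simp
        qed
        finally have "Re (qtr Y (op_mult Y (T E) P)) / c \<le> 0" unfolding lhs by simp
        then have le: "Re (qtr Y (op_mult Y (T E) P)) \<le> 0" using c0 by (simp add: divide_le_0_iff)
        have tp: "op_mult Y (T E) P = mz" by (rule K_lemma[OF finY Tpos[OF E] p le])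
        obtain y where yv: "y \<in> vecs Y" and xy: "x = op_apply Y P y" using x unfolding img_def by blast
        have "op_apply Y (T E) x = (\<lambda>_. 0)" unfolding xy op_apply_mult[symmetric] tp op_apply_mz ..
        moreover have "x \<in> vecs Y" unfolding xy by (rule op_apply_vecs[OF wP])
        ultimately show "x \<in> nullq Y (T E)" unfolding nullq_eq[OF finY Tpos[OF E]] by simp
      qed
    qed
  qed
  have suf: "sat_par V W EE P0 Qt"
    unfolding sat_par_def Y_def[symmetric]
  proof (intro allI impI)
    fix X \<rho> assume a: "finite X \<and> Y \<subseteq> X \<and> pdens X \<rho>"
    then have finX: "finite X" and YX: "Y \<subseteq> X" and rp: "is_pos X \<rho>" unfolding pdens_def by auto
    have wr: "wf_op X \<rho>" using rp unfolding is_pos_def by simp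
    have wP0: "wf_op Y P0" and hP0: "op_adj P0 = P0" using p0 unfolding is_proj_def by auto
    show "Re (qtr X (op_mult X (ext_op Y X P0) \<rho>)) \<le>
          (INF E\<in>EE. Re (qtr X (op_mult X (ext_op Y X Qt) (ext_sop V X E \<rho>))) + Re (qtr X \<rho>) - Re (qtr X (ext_sop V X E \<rho>)))"
    proof (rule cINF_greatest[OF ne])
      fix E assume E: "E \<in> EE"
      have kil0: "\<forall>x\<in>img Y P0. op_apply Y (T E) x = (\<lambda>_. 0)"
      proof
        fix x assume "x \<in> img Y P0"
        then have "x \<in> nullq Y (T E)" unfolding iP0 S_def using E by (rule INT_D)
        then show "op_apply Y (T E) x = (\<lambda>_. 0)" unfolding nullq_eq[OF finY Tpos[OF E]] by simp
      qed
      have tp: "op_mult Y (T E) P0 = mz" by (rule mult_kill[OF finY wP0 kil0])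
      have pt: "op_mult Y P0 (T E) = mz"
      proof -
        have "op_mult Y P0 (T E) = op_adj (op_mult Y (T E) P0)"
          by (simp add: op_adj_mult hP0 Therm[OF E])
        then show ?thesis using tp adj_mz by simp
      qed
      have pX: "is_proj X (ext_op Y X P0)" by (rule ext_proj[OF finX YX p0])
      have ap: "op_mult X (ext_op Y X (T E)) (ext_op Y X P0) = mz"
        unfolding ext_mult[OF finX YX] tp ext_mz ..
      have pa: "op_mult X (ext_op Y X P0) (ext_op Y X (T E)) = mz"
        unfolding ext_mult[OF finX YX] pt ext_mz ..
      have g: "qtr X (op_mult X (ext_op Y X (T E)) \<rho>) =
         qtr X (op_mult X (ext_op Y X (T E)) (op_mult X (op_mult X (proj_perp X (ext_op Y X P0)) \<rho>) (proj_perp X (ext_op Y X P0))))"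
        by (rule GL0[OF finX pX ext_wf ap pa])
      have r2: "is_pos X (op_mult X (op_mult X (proj_perp X (ext_op Y X P0)) \<rho>) (proj_perp X (ext_op Y X P0)))"
        by (rule conj_perp_pos[OF finX pX rp])
      have "Re (qtr X (op_mult X (ext_op Y X (T E)) (op_mult X (op_mult X (proj_perp X (ext_op Y X P0)) \<rho>) (proj_perp X (ext_op Y X P0)))))
         \<le> Re (qtr X (op_mult X (op_mult X (proj_perp X (ext_op Y X P0)) \<rho>) (proj_perp X (ext_op Y X P0))))"
        using T_bounds[OF finX VY YX dp[OF E] pZ r2] unfolding T_def by simp
      also have "\<dots> = Re (qtr X \<rho>) - Re (qtr X (op_mult X (ext_op Y X P0) \<rho>))"
        unfolding conj_perp_tr[OF finX pX wr] by simp
      finally show "Re (qtr X (op_mult X (ext_op Y X P0) \<rho>)) \<le>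
          Re (qtr X (op_mult X (ext_op Y X Qt) (ext_sop V X E \<rho>))) + Re (qtr X \<rho>) - Re (qtr X (ext_sop V X E \<rho>))"
        unfolding key[OF E finX YX] g by simp
    qed
  qed
  have "wlp_a V W EE Q = P0"
    unfolding wlp_a_def Y_def[symmetric] Qt_def[symmetric]
    by (rule the_max[OF finY p0, where F = "\<lambda>P. sat_par V W EE P Qt", OF suf nec])
  then show ?thesis using iP0 unfolding S_def T_def Z_def Y_def by simp
qed

lemma op_apply_mz': "op_apply X mz x = (\<lambda>_. 0)"
  unfolding op_apply_def mz_def by simp

lemma adj_mz': "op_adj mz = mz"
  unfolding op_adj_def mz_def by simp

lemma sp_part:
  assumes finV: "finite V" and np: "is_nprog V EE" and finW: "finite W" and pP: "is_proj W P"
  shows "img (V \<union> W) (sp_a V W EE P) =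
    cspan (\<Union>E\<in>EE. op_supp (V \<union> W) (ext_sop V (V \<union> W) E (ext_op W (V \<union> W) P)))"
proof -
  define Y where "Y = V \<union> W"
  have finY: "finite Y" and VY: "V \<subseteq> Y" and WY: "W \<subseteq> Y" using finV finW unfolding Y_def by auto
  define Pt where "Pt = ext_op W Y P"
  have pPt: "is_proj Y Pt" unfolding Pt_def by (rule ext_proj[OF finY WY pP])
  have wPt: "wf_op Y Pt" and hPt: "op_adj Pt = Pt" using pPt unfolding is_proj_def by auto
  have ne: "EE \<noteq> {}" by (rule nprog_ne[OF np])
  have dp: "\<And>E. E \<in> EE \<Longrightarrow> is_dprog V E" by (rule nprog_dprog[OF np])
  define sg where "sg = (\<lambda>E. ext_sop V Y E Pt)"
  have sgpos: "\<And>E. E \<in> EE \<Longrightarrow> is_pos Y (sg E)"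
    unfolding sg_def by (rule dprog_cp[OF dp finY VY proj_pos[OF finY pPt]])
  have sgwf: "\<And>E. wf_op Y (sg E)" unfolding sg_def by (rule wf_ext_sop)
  define U where "U = (\<Union>E\<in>EE. op_supp Y (sg E))"
  have Uv: "U \<subseteq> vecs Y" unfolding U_def op_supp_def img_def using op_apply_vecs[OF sgwf] by blast
  define S where "S = cspan U"
  have Ssub: "subsp Y S" unfolding S_def by (rule cspan_subsp[OF Uv])
  obtain R0 where r0: "is_proj Y R0" and iR0: "img Y R0 = S" using proj_exists[OF finY Ssub] by blast
  have nec: "\<And>R. is_proj Y R \<Longrightarrow> sat_par V W EE Pt R \<Longrightarrow> img Y R0 \<subseteq> img Y R"
  proof -
    fix R assume r: "is_proj Y R" and st: "sat_par V W EE Pt R"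
    have wR: "wf_op Y R" and hR: "op_adj R = R" using r unfolding is_proj_def by auto
    define c where "c = Re (qtr Y Pt) + 1"
    define \<rho> where "\<rho> = msc (complex_of_real (1 / c)) Pt"
    have nr: "pdens Y \<rho> \<and> c > 0 \<and> Re (qtr Y \<rho>) = Re (qtr Y Pt) / c"
      unfolding \<rho>_def by (rule norm_rho[OF finY pPt c_def])
    then have pd: "pdens Y \<rho>" and c0: "c > 0" and trr: "Re (qtr Y \<rho>) = Re (qtr Y Pt) / c" by auto
    have rp: "is_pos Y \<rho>" using pd unfolding pdens_def by simp
    have sat: "Re (qtr Y (op_mult Y (ext_op Y Y Pt) \<rho>)) \<le>
        (INF E\<in>EE. Re (qtr Y (op_mult Y (ext_op Y Y R) (ext_sop V Y E \<rho>))) + Re (qtr Y \<rho>) - Re (qtr Y (ext_sop V Y E \<rho>)))"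
      using st finY pd unfolding sat_par_def Y_def[symmetric] Pt_def by blast
    have lhs: "Re (qtr Y (op_mult Y (ext_op Y Y Pt) \<rho>)) = Re (qtr Y Pt) / c"
    proof -
      have "op_mult Y Pt Pt = Pt" using pPt unfolding is_proj_def by simp
      then show ?thesis unfolding ext_self[OF wPt] \<rho>_def op_mult_msc_right qtr_msc Re_ofreal_mult by simp
    qed
    have sgr: "\<And>E. E \<in> EE \<Longrightarrow> ext_sop V Y E \<rho> = msc (complex_of_real (1 / c)) (sg E)"
      unfolding \<rho>_def sg_def by (rule ext_sop_msc[OF dp])
    have key: "\<And>E. E \<in> EE \<Longrightarrow>
      Re (qtr Y (op_mult Y (ext_op Y Y R) (ext_sop V Y E \<rho>))) + Re (qtr Y \<rho>) - Re (qtr Y (ext_sop V Y E \<rho>)) =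
      Re (qtr Y \<rho>) - Re (qtr Y (op_mult Y (msub (id_op Y) R) (ext_sop V Y E \<rho>)))"
      unfolding ext_self[OF wR] qtr_perp_mult[OF finY wf_ext_sop] by simp
    have bdd: "bdd_below ((\<lambda>E. Re (qtr Y (op_mult Y (ext_op Y Y R) (ext_sop V Y E \<rho>))) + Re (qtr Y \<rho>) - Re (qtr Y (ext_sop V Y E \<rho>))) ` EE)"
    proof (rule bdd_belowI2[where m = 0])
      fix E assume E: "E \<in> EE"
      have sp: "is_pos Y (ext_sop V Y E \<rho>)" by (rule dprog_cp[OF dp[OF E] finY VY rp])
      have "0 \<le> Re (qtr Y (op_mult Y (ext_op Y Y R) (ext_sop V Y E \<rho>)))"
        using proj_tr_bounds[OF finY ext_proj[OF finY order_refl r] sp] by simp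
      moreover have "Re (qtr Y (ext_sop V Y E \<rho>)) \<le> Re (qtr Y \<rho>)" by (rule tn_ext[OF finY VY dp[OF E] rp])
      ultimately show "0 \<le> Re (qtr Y (op_mult Y (ext_op Y Y R) (ext_sop V Y E \<rho>))) + Re (qtr Y \<rho>) - Re (qtr Y (ext_sop V Y E \<rho>))"
        by simp
    qed
    have Usub: "U \<subseteq> img Y R"
    proof
      fix x assume "x \<in> U"
      then obtain E where E: "E \<in> EE" and x: "x \<in> img Y (sg E)" unfolding U_def op_supp_def by blast
      have "Re (qtr Y (op_mult Y (ext_op Y Y Pt) \<rho>)) \<le>
         Re (qtr Y (op_mult Y (ext_op Y Y R) (ext_sop V Y E \<rho>))) + Re (qtr Y \<rho>) - Re (qtr Y (ext_sop V Y E \<rho>))"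
        using sat cINF_lower[OF bdd E] by linarith
      also have "\<dots> = Re (qtr Y \<rho>) - Re (qtr Y (op_mult Y (msub (id_op Y) R) (ext_sop V Y E \<rho>)))"
        by (rule key[OF E])
      also have "\<dots> = Re (qtr Y Pt) / c - Re (qtr Y (op_mult Y (msub (id_op Y) R) (sg E))) / c"
      proof -
        have "Re (qtr Y (op_mult Y (msub (id_op Y) R) (ext_sop V Y E \<rho>))) =
              Re (qtr Y (op_mult Y (msub (id_op Y) R) (sg E))) / c"
          unfolding sgr[OF E] op_mult_msc_right qtr_msc Re_ofreal_mult by simp
        then show ?thesis unfolding trr by simp
      qed
      finally have "Re (qtr Y (op_mult Y (msub (id_op Y) R) (sg E))) / c \<le> 0" unfolding lhs by simp
      then have "Re (qtr Y (op_mult Y (msub (id_op Y) R) (sg E))) \<le> 0" using c0 by (simp add: divide_le_0_iff)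
      then have le: "Re (qtr Y (op_mult Y (sg E) (proj_perp Y R))) \<le> 0"
        unfolding perp_msub by (simp add: qtr_cyclic[of Y "sg E"])
      have z: "op_mult Y (sg E) (proj_perp Y R) = mz"
        by (rule K_lemma[OF finY sgpos[OF E] proj_perp_proj[OF finY r] le])
      have hs: "op_adj (sg E) = sg E" by (rule pos_herm[OF finY sgpos[OF E]])
      have z2: "op_mult Y (msub (id_op Y) R) (sg E) = mz"
      proof -
        have "op_mult Y (msub (id_op Y) R) (sg E) = op_adj (op_mult Y (sg E) (proj_perp Y R))"
          unfolding op_adj_mult hs perp_msub adj_msub adj_id hR ..
        then show ?thesis using z adj_mz' by simp
      qed
      have rs: "op_mult Y R (sg E) = sg E"
      proof (intro ext)
        fix s t
        have "op_mult Y (msub (id_op Y) R) (sg E) s t = 0" using z2 by (simp add: mz_def)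
        then show "op_mult Y R (sg E) s t = sg E s t"
          unfolding op_mult_msub_left op_mult_id_left[OF finY sgwf] by (simp add: msub_def)
      qed
      obtain y where yv: "y \<in> vecs Y" and xy: "x = op_apply Y (sg E) y" using x unfolding img_def by blast
      have "op_apply Y R x = x" unfolding xy op_apply_mult[symmetric] rs ..
      moreover have "x \<in> vecs Y" unfolding xy by (rule op_apply_vecs[OF sgwf])
      ultimately show "x \<in> img Y R" unfolding img_proj[OF finY r] by simp
    qed
    show "img Y R0 \<subseteq> img Y R" unfolding iR0 S_def by (rule cspan_min[OF img_subsp[OF finY r] Usub])
  qed
  have suf: "sat_par V W EE Pt R0"
    unfolding sat_par_def Y_def[symmetric]
  proof (intro allI impI)
    fix X \<rho> assume a: "finite X \<and> Y \<subseteq> X \<and> pdens X \<rho>"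
    then have finX: "finite X" and YX: "Y \<subseteq> X" and rp: "is_pos X \<rho>" unfolding pdens_def by auto
    have wr: "wf_op X \<rho>" using rp unfolding is_pos_def by simp
    define Z where "Z = proj_perp Y R0"
    have pZ: "is_proj Y Z" unfolding Z_def by (rule proj_perp_proj[OF finY r0])
    have wZ: "wf_op Y Z" using pZ unfolding is_proj_def by simp
    show "Re (qtr X (op_mult X (ext_op Y X Pt) \<rho>)) \<le>
          (INF E\<in>EE. Re (qtr X (op_mult X (ext_op Y X R0) (ext_sop V X E \<rho>))) + Re (qtr X \<rho>) - Re (qtr X (ext_sop V X E \<rho>)))"
    proof (rule cINF_greatest[OF ne])
      fix E assume E: "E \<in> EE"
      define T where "T = ext_sop V Y (sop_adj V E) Z"
      have Tpos: "is_pos Y T" unfolding T_def by (rule T_pos[OF finY VY dp[OF E] pZ])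
      have hT: "op_adj T = T" by (rule pos_herm[OF finY Tpos])
      have key: "Re (qtr X (op_mult X (ext_op Y X R0) (ext_sop V X E \<rho>))) + Re (qtr X \<rho>) - Re (qtr X (ext_sop V X E \<rho>)) =
         Re (qtr X \<rho>) - Re (qtr X (op_mult X (ext_op Y X T) \<rho>))"
      proof -
        have "qtr X (op_mult X (ext_op Y X T) \<rho>) = qtr X (op_mult X (ext_op Y X Z) (ext_sop V X E \<rho>))"
          unfolding T_def by (rule T_dual[OF finX VY YX dp[OF E], symmetric])
        also have "\<dots> = qtr X (ext_sop V X E \<rho>) - qtr X (op_mult X (ext_op Y X R0) (ext_sop V X E \<rho>))"
        proof -
          have "ext_op Y X Z = proj_perp X (ext_op Y X R0)" unfolding Z_def by (rule ext_perp[OF YX])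
          then have eZ: "ext_op Y X Z = msub (id_op X) (ext_op Y X R0)" unfolding perp_msub .
          show ?thesis unfolding eZ by (rule qtr_perp_mult[OF finX wf_ext_sop])
        qed
        finally show ?thesis by simp
      qed
      have fixU: "\<forall>x\<in>img Y (sg E). op_apply Y R0 x = x"
      proof
        fix x assume "x \<in> img Y (sg E)"
        then have "x \<in> U" unfolding U_def op_supp_def using E by blast
        then have "x \<in> img Y R0" unfolding iR0 S_def by (rule cspan_in)
        then show "op_apply Y R0 x = x" using img_proj_fix[OF finY r0] by blast
      qed
      have rs: "op_mult Y R0 (sg E) = sg E" by (rule mult_fix[OF finY sgwf fixU])
      have zs: "op_mult Y Z (sg E) = mz"
        unfolding Z_def perp_msub op_mult_msub_left op_mult_id_left[OF finY sgwf] rs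
        by (simp add: msub_def mz_def)
      have "qtr Y (op_mult Y T Pt) = qtr Y (op_mult Y (ext_op Y Y T) Pt)"
        unfolding T_def by (simp add: ext_self[OF wf_ext_sop])
      also have "\<dots> = qtr Y (op_mult Y (ext_op Y Y Z) (ext_sop V Y E Pt))"
        unfolding T_def by (rule T_dual[OF finY VY order_refl dp[OF E], symmetric])
      also have "\<dots> = 0" unfolding ext_self[OF wZ] using zs unfolding sg_def by (simp add: qtr_mz)
      finally have "Re (qtr Y (op_mult Y T Pt)) \<le> 0" by simp
      then have tp: "op_mult Y T Pt = mz" by (rule K_lemma[OF finY Tpos pPt])
      have pt: "op_mult Y Pt T = mz"
      proof -
        have "op_mult Y Pt T = op_adj (op_mult Y T Pt)" by (simp add: op_adj_mult hPt hT)
        then show ?thesis using tp adj_mz' by simp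
      qed
      have pX: "is_proj X (ext_op Y X Pt)" by (rule ext_proj[OF finX YX pPt])
      have ap: "op_mult X (ext_op Y X T) (ext_op Y X Pt) = mz"
        unfolding ext_mult[OF finX YX] tp ext_mz ..
      have pa: "op_mult X (ext_op Y X Pt) (ext_op Y X T) = mz"
        unfolding ext_mult[OF finX YX] pt ext_mz ..
      have g: "qtr X (op_mult X (ext_op Y X T) \<rho>) =
         qtr X (op_mult X (ext_op Y X T) (op_mult X (op_mult X (proj_perp X (ext_op Y X Pt)) \<rho>) (proj_perp X (ext_op Y X Pt))))"
        by (rule GL0[OF finX pX ext_wf ap pa])
      have r2: "is_pos X (op_mult X (op_mult X (proj_perp X (ext_op Y X Pt)) \<rho>) (proj_perp X (ext_op Y X Pt)))"
        by (rule conj_perp_pos[OF finX pX rp])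
      have "Re (qtr X (op_mult X (ext_op Y X T) (op_mult X (op_mult X (proj_perp X (ext_op Y X Pt)) \<rho>) (proj_perp X (ext_op Y X Pt)))))
         \<le> Re (qtr X (op_mult X (op_mult X (proj_perp X (ext_op Y X Pt)) \<rho>) (proj_perp X (ext_op Y X Pt))))"
        using T_bounds[OF finX VY YX dp[OF E] pZ r2] unfolding T_def by simp
      also have "\<dots> = Re (qtr X \<rho>) - Re (qtr X (op_mult X (ext_op Y X Pt) \<rho>))"
        unfolding conj_perp_tr[OF finX pX wr] by simp
      finally show "Re (qtr X (op_mult X (ext_op Y X Pt) \<rho>)) \<le>
          Re (qtr X (op_mult X (ext_op Y X R0) (ext_sop V X E \<rho>))) + Re (qtr X \<rho>) - Re (qtr X (ext_sop V X E \<rho>))"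
        unfolding key g by simp
    qed
  qed
  have "sp_a V W EE P = R0"
    unfolding sp_a_def Y_def[symmetric] Pt_def[symmetric]
    by (rule the_min[OF finY r0, where F = "\<lambda>R. sat_par V W EE Pt R", OF suf nec])
  then show ?thesis using iR0 unfolding S_def U_def sg_def Pt_def Y_def by simp
qed

theorem lemma5p5:
  fixes V W :: "nat set" and EE :: "sop set" and P Q :: qop
  assumes "finite V" and "is_nprog V EE" and "finite W"
    and "is_proj W P" and "is_proj W Q"
  shows "img (V \<union> W) (wp_a V W EE Q) =
           (\<Inter>E\<in>EE. eig1 (V \<union> W) (ext_sop V (V \<union> W) (sop_adj V E) (ext_op W (V \<union> W) Q))) \<and>
         img (V \<union> W) (wlp_a V W EE Q) =
           (\<Inter>E\<in>EE. nullq (V \<union> W)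
              (ext_sop V (V \<union> W) (sop_adj V E) (ext_op W (V \<union> W) (proj_perp W Q)))) \<and>
         img (V \<union> W) (sp_a V W EE P) =
           cspan (\<Union>E\<in>EE. op_supp (V \<union> W) (ext_sop V (V \<union> W) E (ext_op W (V \<union> W) P)))"
  using wp_part[OF assms(1,2,3,5)] wlp_part[OF assms(1,2,3,5)] sp_part[OF assms(1,2,3,4)]
  by (intro conjI)

end
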